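(* Let $m\ge1$, $\mathbf x=(x_1,\dots,x_{m+1})$, $\mathbf y=(y_1,\dots,y_{m+1})$, and $\widetilde Z_{\mathrm{HT}}(2m+1;\mathbf x,\mathbf y)=\big[\prod_{i=1}^m x_i^{2m}y_i^{2m}\big]x_{m+1}^my_{m+1}^mZ_{\mathrm{HT}}(2m+1;\mathbf x,\mathbf y)$, which is a polynomial. Then \[ \widetilde Z_{\mathrm{HT}}(2m+1;\mathbf x,\mathbf y)=\Big[\prod_{i=1}^m x_i^{4m}\Big]x_{m+1}^{2m}C_{\mathrm{HT}}(2m+1)+(\text{terms of lower total degree in }x_1,\dots,x_{m+1}),\qquad C_{\mathrm{HT}}(2m+1)=\prod_{i=2}^{2m+1}\sigma(a^i). \]
   Context: Notation: $\bar z=z^{-1}$, $\sigma(z)=z-z^{-1}$; $a$ is a fixed nonzero parameter. Vertex weights: at a vertex where a horizontal and a vertical line cross, the four incident edges are oriented with exactly two pointing in. Type 1: horizontal edges in, vertical out; type 2: horizontal out, vertical in; type 3: horizontal right, vertical up; type 4: horizontal left, vertical down; type 5: horizontal left, vertical up; type 6: horizontal right, vertical down. A vertex with spectral parameter $z$ has weight $\sigma(a^2)$ (types 1,2), $\sigma(az)$ (types 3,4), $\sigma(a\bar z)$ (types 5,6). A state is an orientation of internal edges satisfying the two-in rule at every vertex; the partition function is the sum over states of the product of vertex weights. Odd half-turn model $Z_{\mathrm{HT}}(2m+1;\mathbf x,\mathbf y)$: vertices $(r,j)$ with $1\le r\le 2m+1$ (from the top), $1\le j\le m$ (from the left), and $(r,m+1)$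 with $m+2\le r\le 2m+1$; vertex $(r,j)$ has parameter $x_{\min(r,2m+2-r)}\bar y_j$. Edges join consecutive vertices in rows and columns. Left boundary edges point right (into the grid), top boundary edges of columns $1,\dots,m$ point up, bottom boundary edges of columns $1,\dots,m+1$ point down. The edge to the right of $(m+1,m)$ and the edge above $(m+2,m+1)$ form a single edge, pointing right out of $(m+1,m)$ iff pointing down into $(m+2,m+1)$. For each $r\le m$ the edges to the right of $(r,m)$ and of $(2m+2-r,m+1)$ form a single edge with one orientation (out of one vertex, into the other). *)

theory Defs
  imports Complex_Main
begin

definition sig :: "complex \<Rightarrow> complex" where
  "sig z = z - inverse z"

definition ht_vert :: "nat \<Rightarrow> (nat \<times> nat) set" where
  "ht_vert m = {(r,j). 1 \<le> r \<and> r \<le> 2*m+1 \<and> 1 \<le> j \<and> j \<le> m}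
             \<union> {(r,j). j = m+1 \<and> m+2 \<le> r \<and> r \<le> 2*m+1}"

(* A state is encoded by a pair (H,V) of sets of vertices:
   (r,j) \<in> H  iff the edge to the right of vertex (r,j) points right;
   (r,j) \<in> V  iff the edge above vertex (r,j) points up
   (only for r \<ge> 2; edges above row 1 are boundary edges). *)

(* orientation of the four edges at vertex (r,j): (left edge points right,
   right edge points right, top edge points up, bottom edge points down) *)
definition ht_left :: "nat \<Rightarrow> (nat \<times> nat) set \<Rightarrow> nat \<Rightarrow> nat \<Rightarrow> bool" where
  "ht_left m H r j = (if j = 1 then True else (r, j-1) \<in> H)"
definition ht_right :: "nat \<Rightarrow> (nat \<times> nat) set \<Rightarrow> nat \<Rightarrow> nat \<Rightarrow> bool" where
  "ht_right m H r j = ((r, j) \<in> H)"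
definition ht_up :: "nat \<Rightarrow> (nat \<times> nat) set \<Rightarrow> nat \<Rightarrow> nat \<Rightarrow> bool" where
  "ht_up m V r j = (if r = 1 then True else (r, j) \<in> V)"
definition ht_down :: "nat \<Rightarrow> (nat \<times> nat) set \<Rightarrow> nat \<Rightarrow> nat \<Rightarrow> bool" where
  "ht_down m V r j = (if r = 2*m+1 then True else (r+1, j) \<notin> V)"

definition vtype :: "bool \<Rightarrow> bool \<Rightarrow> bool \<Rightarrow> bool \<Rightarrow> nat" where
  "vtype L R U D =
     (if L \<and> \<not> R \<and> U \<and> D then 1
      else if \<not> L \<and> R \<and> \<not> U \<and> \<not> D then 2
      else if L \<and> R \<and> U \<and> \<not> D then 3
      else if \<not> L \<and> \<not> R \<and> \<not> U \<and> D then 4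
      else if \<not> L \<and> \<not> R \<and> U \<and> \<not> D then 5
      else if L \<and> R \<and> \<not> U \<and> D then 6
      else 0)"

definition vweight :: "complex \<Rightarrow> nat \<Rightarrow> complex \<Rightarrow> complex" where
  "vweight a t z =
     (if t = 1 \<or> t = 2 then sig (a^2)
      else if t = 3 \<or> t = 4 then sig (a * z)
      else if t = 5 \<or> t = 6 then sig (a * inverse z)
      else 0)"

(* admissible states: H \<subseteq> vertices, V \<subseteq> vertices not in row 1,
   gluing conditions, and two-in rule at every vertex *)
definition ht_states :: "nat \<Rightarrow> ((nat \<times> nat) set \<times> (nat \<times> nat) set) set" where
  "ht_states m = {(H,V). H \<subseteq> ht_vert m \<and> V \<subseteq> {v \<in> ht_vert m. 2 \<le> fst v}
      \<and> (((m+1, m) \<in> H) \<longleftrightarrow> (m+2, m+1) \<notin> V)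
      \<and> (\<forall>r\<in>{1..m}. ((r, m) \<in> H) \<longleftrightarrow> (2*m+2-r, m+1) \<notin> H)
      \<and> (\<forall>(r,j)\<in>ht_vert m.
            vtype (ht_left m H r j) (ht_right m H r j) (ht_up m V r j) (ht_down m V r j) \<noteq> 0)}"

definition ht_param :: "nat \<Rightarrow> (nat \<Rightarrow> complex) \<Rightarrow> (nat \<Rightarrow> complex) \<Rightarrow> nat \<Rightarrow> nat \<Rightarrow> complex" where
  "ht_param m x y r j = x (min r (2*m+2-r)) * inverse (y j)"

definition Z_HT :: "complex \<Rightarrow> nat \<Rightarrow> (nat \<Rightarrow> complex) \<Rightarrow> (nat \<Rightarrow> complex) \<Rightarrow> complex" where
  "Z_HT a m x y = (\<Sum>(H,V)\<in>ht_states m. \<Prod>(r,j)\<in>ht_vert m.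
       vweight a (vtype (ht_left m H r j) (ht_right m H r j) (ht_up m V r j) (ht_down m V r j))
               (ht_param m x y r j))"

definition Zt_HT :: "complex \<Rightarrow> nat \<Rightarrow> (nat \<Rightarrow> complex) \<Rightarrow> (nat \<Rightarrow> complex) \<Rightarrow> complex" where
  "Zt_HT a m x y = (\<Prod>i=1..m. x i ^ (2*m) * y i ^ (2*m)) * x (m+1) ^ m * y (m+1) ^ m * Z_HT a m x y"

definition C_HT :: "complex \<Rightarrow> nat \<Rightarrow> complex" where
  "C_HT a m = (\<Prod>i=2..2*m+1. sig (a ^ i))"

end

theory Submission
  imports Defs "HOL-Combinatorics.Multiset_Permutations"
begin


fun lw :: "(nat \<Rightarrow> 'a::comm_ring_1) \<Rightarrow> nat list \<Rightarrow> 'a" where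
  "lw h [] = 1"
| "lw h (x#ys) = h (card {y\<in>set ys. x < y}) * lw h ys"

lemma rank_bij:
  fixes S :: "nat set"
  assumes "finite S"
  shows "bij_betw (\<lambda>x. card {y\<in>S. x < y}) S {..<card S}"
proof -
  let ?f = "\<lambda>x. card {y\<in>S. x < y}"
  have inj: "inj_on ?f S"
  proof (rule inj_onI)
    fix x x' assume xs: "x \<in> S" "x' \<in> S" and eq: "?f x = ?f x'"
    show "x = x'"
    proof (rule ccontr)
      assume "x \<noteq> x'"
      then consider "x < x'" | "x' < x" by linarith
      then show False
      proof cases
        case 1
        have "{y\<in>S. x' < y} \<subset> {y\<in>S. x < y}" using 1 xs by auto
        then have "?f x' < ?f x" using assms by (intro psubset_card_mono) auto
        then show False using eq by simp
      next
        case 2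
        have "{y\<in>S. x < y} \<subset> {y\<in>S. x' < y}" using 2 xs by auto
        then have "?f x < ?f x'" using assms by (intro psubset_card_mono) auto
        then show False using eq by simp
      qed
    qed
  qed
  have sub: "?f ` S \<subseteq> {..<card S}"
  proof
    fix k assume "k \<in> ?f ` S"
    then obtain x where x: "x \<in> S" "k = ?f x" by auto
    have "{y\<in>S. x < y} \<subset> S" using x by auto
    then have "?f x < card S" using assms by (intro psubset_card_mono) auto
    then show "k \<in> {..<card S}" using x by simp
  qed
  have "card (?f ` S) = card {..<card S}" using card_image[OF inj] by simp
  then have "?f ` S = {..<card S}" using sub by (intro card_subset_eq) auto
  then show ?thesis using inj by (simp add: bij_betw_def)
qed

lemma lehmer_sum:
  fixes h :: "nat \<Rightarrow> 'a::comm_ring_1"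
  shows "finite S \<Longrightarrow> (\<Sum>xs\<in>permutations_of_set S. lw h xs) = (\<Prod>p=1..card S. \<Sum>k<p. h k)"
proof (induction "card S" arbitrary: S)
  case 0
  then have "S = {}" by simp
  then show ?case by simp
next
  case (Suc n)
  then have ne: "S \<noteq> {}" by auto
  have IH: "\<And>x. x \<in> S \<Longrightarrow> (\<Sum>xs\<in>permutations_of_set (S - {x}). lw h xs) = (\<Prod>p=1..n. \<Sum>k<p. h k)"
    using Suc by (metis card_Diff_singleton diff_Suc_1 finite_Diff)
  have "(\<Sum>xs\<in>permutations_of_set S. lw h xs)
      = (\<Sum>x\<in>S. \<Sum>xs\<in>(\<lambda>xs. x # xs) ` permutations_of_set (S - {x}). lw h xs)"
    unfolding permutations_of_set_nonempty[OF ne]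
    using Suc.prems by (intro sum.UNION_disjoint) auto
  also have "\<dots> = (\<Sum>x\<in>S. \<Sum>ys\<in>permutations_of_set (S - {x}). lw h (x # ys))"
    by (rule sum.cong[OF refl], subst sum.reindex) (auto simp: inj_on_def)
  also have "\<dots> = (\<Sum>x\<in>S. h (card {y\<in>S. x < y}) * (\<Sum>ys\<in>permutations_of_set (S - {x}). lw h ys))"
  proof (intro sum.cong refl)
    fix x assume x: "x \<in> S"
    have "\<And>ys. ys \<in> permutations_of_set (S - {x}) \<Longrightarrow> {y\<in>set ys. x < y} = {y\<in>S. x < y}"
      using x by (auto dest: permutations_of_setD)
    then show "(\<Sum>ys\<in>permutations_of_set (S - {x}). lw h (x # ys)) =
          h (card {y\<in>S. x < y}) * (\<Sum>ys\<in>permutations_of_set (S - {x}). lw h ys)"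
      by (simp add: sum_distrib_left)
  qed
  also have "\<dots> = (\<Sum>x\<in>S. h (card {y\<in>S. x < y})) * (\<Prod>p=1..n. \<Sum>k<p. h k)"
    using IH by (simp add: sum_distrib_right)
  also have "(\<Sum>x\<in>S. h (card {y\<in>S. x < y})) = (\<Sum>k<card S. h k)"
    using sum.reindex_bij_betw[OF rank_bij[OF Suc.prems], of h] by simp
  also have "(\<Sum>k<card S. h k) * (\<Prod>p=1..n. \<Sum>k<p. h k) = (\<Prod>p=1..card S. \<Sum>k<p. h k)"
    using Suc.hyps(2)[symmetric] by (simp add: prod.nat_ivl_Suc' mult.commute)
  finally show ?case .
qed


lemma sig_key:
  fixes a t :: complex
  assumes "a \<noteq> 0" "t \<noteq> 0"
  shows "sig (a^2) * sig (a^3 * t^4) + sig (t^2) * sig (a * t^2) = sig (a^2 * t^2) * sig (a^3 * t^2)"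
  using assms unfolding sig_def by (simp add: field_simps) algebra

lemma sig_telescope:
  fixes a :: complex
  assumes "a \<noteq> 0"
  shows "sig (a^2) * (\<Sum>k<p. sig (a^(4*k+3))) = sig (a^(2*p)) * sig (a^(2*p+1))"
proof (induction p)
  case 0
  then show ?case by (simp add: sig_def)
next
  case (Suc p)
  have e1: "a^(4*p+3) = a^3 * (a^p)^4" by (simp add: power_mult[symmetric] power_add[symmetric] mult.commute add.commute)
  have e2: "a^(2*p) = (a^p)^2" by (simp add: power_mult[symmetric] mult.commute)
  have e3: "a^(2*p+1) = a * (a^p)^2" by (simp add: power_mult[symmetric] mult.commute)
  have e4: "a^(2*Suc p) = a^2 * (a^p)^2" by (simp add: power_mult[symmetric] power_add[symmetric] mult.commute)
  have e5: "a^(2*Suc p+1) = a^3 * (a^p)^2" by (simp add: power_mult[symmetric] power_add[symmetric] mult.commute eval_nat_numeral)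
  have "sig (a^2) * (\<Sum>k<Suc p. sig (a^(4*k+3))) = sig (a^2) * sig (a^(4*p+3)) + sig (a^(2*p)) * sig (a^(2*p+1))"
    using Suc by (simp add: distrib_left)
  also have "\<dots> = sig (a^(2*Suc p)) * sig (a^(2*Suc p+1))"
    unfolding e1 e2 e3 e4 e5 using assms by (intro sig_key) auto
  finally show ?case .
qed

lemma C_HT_alt:
  fixes a :: complex
  assumes "a \<noteq> 0"
  shows "sig (a^2)^m * (\<Prod>p=1..m. \<Sum>k<p. sig (a^(4*k+3))) = C_HT a m"
proof (induction m)
  case 0
  then show ?case by (simp add: C_HT_def)
next
  case (Suc m)
  have "{2..2*Suc m+1} = insert (2*m+3) (insert (2*m+2) {2..2*m+1})" by auto
  then have "C_HT a (Suc m) = sig (a^(2*m+3)) * sig (a^(2*m+2)) * C_HT a m"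
    by (simp add: C_HT_def)
  moreover have Y: "sig (a^2) * (\<Sum>k<Suc m. sig (a^(4*k+3))) = sig (a^(2*m+2)) * sig (a^(2*m+3))"
  proof -
    have q: "2*Suc m = 2*m+2" "2*m+2 + 1 = 2*m+3" by simp_all
    show ?thesis using sig_telescope[OF assms, of "Suc m"] unfolding q .
  qed
  moreover have X: "sig (a^2)^(Suc m) * (\<Prod>p=1..Suc m. \<Sum>k<p. sig (a^(4*k+3)))
     = (sig (a^2) * (\<Sum>k<Suc m. sig (a^(4*k+3)))) * (sig (a^2)^m * (\<Prod>p=1..m. \<Sum>k<p. sig (a^(4*k+3))))"
    by (simp only: prod.nat_ivl_Suc' power_Suc) (simp add: algebra_simps)
  ultimately show ?case unfolding X using Suc.IH by (simp only: mult.commute)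
qed


definition mon :: "nat \<Rightarrow> (nat\<Rightarrow>nat) \<Rightarrow> (nat\<Rightarrow>nat) \<Rightarrow> (nat\<Rightarrow>complex) \<Rightarrow> (nat\<Rightarrow>complex) \<Rightarrow> complex" where
  "mon n e f x y = (\<Prod>i=1..n. x i ^ e i * y i ^ f i)"
definition degx :: "nat \<Rightarrow> (nat\<Rightarrow>nat) \<Rightarrow> nat" where
  "degx n e = (\<Sum>i=1..n. e i)"
definition nzv :: "nat \<Rightarrow> (nat\<Rightarrow>complex) \<Rightarrow> (nat\<Rightarrow>complex) \<Rightarrow> bool" where
  "nzv n x y = (\<forall>i\<in>{1..n}. x i \<noteq> 0 \<and> y i \<noteq> 0)"
definition PL :: "nat \<Rightarrow> (nat \<Rightarrow> bool) \<Rightarrow> ((nat\<Rightarrow>complex) \<Rightarrow> (nat\<Rightarrow>complex) \<Rightarrow> complex) \<Rightarrow> bool" where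
  "PL n P F = (\<exists>E c. finite E \<and> (\<forall>(e,f)\<in>E. P (degx n e)) \<and>
      (\<forall>x y. nzv n x y \<longrightarrow> F x y = (\<Sum>(e,f)\<in>E. c (e,f) * mon n e f x y)))"

lemma PL_cong:
  assumes "PL n P F" "\<And>x y. nzv n x y \<Longrightarrow> F x y = G x y"
  shows "PL n P G"
proof -
  obtain E c where E: "finite E" "\<forall>(e,f)\<in>E. P (degx n e)"
    "\<forall>x y. nzv n x y \<longrightarrow> F x y = (\<Sum>(e,f)\<in>E. c (e,f) * mon n e f x y)"
    using assms unfolding PL_def by blast
  show ?thesis unfolding PL_def using E assms(2) by (intro exI[of _ E] exI[of _ c]) auto
qed

lemma PL_mono:
  assumes "PL n P F" "\<And>d. P d \<Longrightarrow> Q d"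
  shows "PL n Q F"
proof -
  obtain E c where E: "finite E" "\<forall>(e,f)\<in>E. P (degx n e)"
    "\<forall>x y. nzv n x y \<longrightarrow> F x y = (\<Sum>(e,f)\<in>E. c (e,f) * mon n e f x y)"
    using assms unfolding PL_def by blast
  show ?thesis unfolding PL_def using E assms(2) by (intro exI[of _ E] exI[of _ c]) auto
qed

lemma PL_zero: "PL n P (\<lambda>x y. 0)"
  unfolding PL_def by (rule exI[of _ "{}"]) auto

lemma PL_mon:
  assumes "P (degx n e)"
  shows "PL n P (\<lambda>x y. mon n e f x y)"
  unfolding PL_def using assms
  by (intro exI[of _ "{(e,f)}"] exI[of _ "\<lambda>_. 1"]) auto

lemma mon_zero: "mon n (\<lambda>_. 0) (\<lambda>_. 0) x y = 1"
  by (simp add: mon_def)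

lemma degx_zero: "degx n (\<lambda>_. 0) = 0"
  by (simp add: degx_def)

lemma PL_const:
  assumes "P 0"
  shows "PL n P (\<lambda>x y. k)"
  unfolding PL_def using assms
  by (intro exI[of _ "{((\<lambda>_. 0),(\<lambda>_. 0))}"] exI[of _ "\<lambda>_. k"]) (auto simp: mon_zero degx_zero)

lemma PL_scale:
  assumes "PL n P F"
  shows "PL n P (\<lambda>x y. k * F x y)"
proof -
  obtain E c where E: "finite E" "\<forall>(e,f)\<in>E. P (degx n e)"
    "\<forall>x y. nzv n x y \<longrightarrow> F x y = (\<Sum>(e,f)\<in>E. c (e,f) * mon n e f x y)"
    using assms unfolding PL_def by blast
  show ?thesis unfolding PL_def
    apply (intro exI[of _ E] exI[of _ "\<lambda>p. k * c p"])
    using E by (auto simp: sum_distrib_left case_prod_beta mult.assoc)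
qed

lemma PL_add:
  assumes "PL n P F" "PL n P G"
  shows "PL n P (\<lambda>x y. F x y + G x y)"
proof -
  obtain E c where E: "finite E" "\<forall>(e,f)\<in>E. P (degx n e)"
    "\<forall>x y. nzv n x y \<longrightarrow> F x y = (\<Sum>(e,f)\<in>E. c (e,f) * mon n e f x y)"
    using assms unfolding PL_def by blast
  obtain E' c' where E': "finite E'" "\<forall>(e,f)\<in>E'. P (degx n e)"
    "\<forall>x y. nzv n x y \<longrightarrow> G x y = (\<Sum>(e,f)\<in>E'. c' (e,f) * mon n e f x y)"
    using assms unfolding PL_def by blast
  define d where "d p = (if p \<in> E then c p else 0) + (if p \<in> E' then c' p else 0)" for p
  have "\<forall>x y. nzv n x y \<longrightarrow> F x y + G x y = (\<Sum>(e,f)\<in>E \<union> E'. d (e,f) * mon n e f x y)"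
  proof (intro allI impI)
    fix x y assume nz: "nzv n x y"
    have s1: "(\<Sum>p\<in>E \<union> E'. (if p \<in> E then c p else 0) * mon n (fst p) (snd p) x y)
        = (\<Sum>p\<in>E. c p * mon n (fst p) (snd p) x y)"
      using E(1) E'(1) by (intro sum.mono_neutral_cong_right) auto
    have s2: "(\<Sum>p\<in>E \<union> E'. (if p \<in> E' then c' p else 0) * mon n (fst p) (snd p) x y)
        = (\<Sum>p\<in>E'. c' p * mon n (fst p) (snd p) x y)"
      using E(1) E'(1) by (intro sum.mono_neutral_cong_right) auto
    have s3: "(\<Sum>p\<in>E \<union> E'. d p * mon n (fst p) (snd p) x y) =
       (\<Sum>p\<in>E \<union> E'. (if p \<in> E then c p else 0) * mon n (fst p) (snd p) x y) +
       (\<Sum>p\<in>E \<union> E'. (if p \<in> E' then c' p else 0) * mon n (fst p) (snd p) x y)"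
      unfolding d_def by (simp only: distrib_right sum.distrib)
    have "F x y + G x y = (\<Sum>p\<in>E \<union> E'. d p * mon n (fst p) (snd p) x y)"
      unfolding s3 s1 s2 using E(3) E'(3) nz by (simp add: case_prod_beta)
    then show "F x y + G x y = (\<Sum>(e,f)\<in>E \<union> E'. d (e,f) * mon n e f x y)"
      by (simp add: case_prod_beta)
  qed
  then show ?thesis unfolding PL_def using E E'
    by (intro exI[of _ "E \<union> E'"] exI[of _ d]) auto
qed

lemma PL_neg:
  assumes "PL n P F"
  shows "PL n P (\<lambda>x y. - F x y)"
  using PL_scale[OF assms, of "-1"] by simp

lemma PL_diff:
  assumes "PL n P F" "PL n P G"
  shows "PL n P (\<lambda>x y. F x y - G x y)"
  using PL_add[OF assms(1) PL_neg[OF assms(2)]] by simp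

lemma PL_sum:
  assumes "finite A" "\<And>a. a \<in> A \<Longrightarrow> PL n P (F a)"
  shows "PL n P (\<lambda>x y. \<Sum>a\<in>A. F a x y)"
  using assms
proof (induction A rule: finite_induct)
  case empty
  then show ?case by (simp add: PL_zero)
next
  case (insert a A)
  then show ?case by (simp add: PL_add)
qed

lemma mon_mult: "mon n e f x y * mon n e' f' x y = mon n (\<lambda>i. e i + e' i) (\<lambda>i. f i + f' i) x y"
  unfolding mon_def by (simp add: prod.distrib[symmetric] power_add algebra_simps)

lemma degx_add: "degx n (\<lambda>i. e i + e' i) = degx n e + degx n e'"
  unfolding degx_def by (simp add: sum.distrib)

lemma PL_mult:
  assumes "PL n P F" "PL n Q G" "\<And>d1 d2. P d1 \<Longrightarrow> Q d2 \<Longrightarrow> R (d1 + d2)"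
  shows "PL n R (\<lambda>x y. F x y * G x y)"
proof -
  obtain E c where E: "finite E" "\<forall>(e,f)\<in>E. P (degx n e)"
    "\<forall>x y. nzv n x y \<longrightarrow> F x y = (\<Sum>(e,f)\<in>E. c (e,f) * mon n e f x y)"
    using assms unfolding PL_def by blast
  obtain E' c' where E': "finite E'" "\<forall>(e,f)\<in>E'. Q (degx n e)"
    "\<forall>x y. nzv n x y \<longrightarrow> G x y = (\<Sum>(e,f)\<in>E'. c' (e,f) * mon n e f x y)"
    using assms unfolding PL_def by blast
  define g where "g q = ((\<lambda>i. fst (fst q) i + fst (snd q) i), (\<lambda>i. snd (fst q) i + snd (snd q) i))" for q :: "((nat\<Rightarrow>nat)\<times>(nat\<Rightarrow>nat))\<times>((nat\<Rightarrow>nat)\<times>(nat\<Rightarrow>nat))"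
  define K where "K = E \<times> E'"
  define d where "d p = (\<Sum>q\<in>{q\<in>K. g q = p}. c (fst q) * c' (snd q))" for p
  have fK: "finite K" using E(1) E'(1) K_def by simp
  have deg: "\<forall>(e,f)\<in>g ` K. R (degx n e)"
  proof
    fix p assume "p \<in> g ` K"
    then obtain q where q: "q \<in> K" "p = g q" by auto
    then have "P (degx n (fst (fst q)))" "Q (degx n (fst (snd q)))"
      using E(2) E'(2) unfolding K_def by (auto simp: case_prod_beta)
    then show "case p of (e,f) \<Rightarrow> R (degx n e)"
      using q assms(3) by (simp add: g_def degx_add)
  qed
  have eq: "\<forall>x y. nzv n x y \<longrightarrow> F x y * G x y = (\<Sum>(e,f)\<in>g ` K. d (e,f) * mon n e f x y)"
  proof (intro allI impI)
    fix x y assume nz: "nzv n x y"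
    have "F x y * G x y = (\<Sum>p\<in>E. \<Sum>p'\<in>E'. (c p * mon n (fst p) (snd p) x y) * (c' p' * mon n (fst p') (snd p') x y))"
      using E(3) E'(3) nz by (simp add: case_prod_beta sum_product)
    also have "\<dots> = (\<Sum>q\<in>K. c (fst q) * c' (snd q) * mon n (fst (g q)) (snd (g q)) x y)"
      unfolding K_def sum.cartesian_product
      by (intro sum.cong refl) (auto simp: g_def mon_mult[symmetric] algebra_simps)
    also have "\<dots> = (\<Sum>p\<in>g ` K. \<Sum>q\<in>{q\<in>K. g q = p}. c (fst q) * c' (snd q) * mon n (fst (g q)) (snd (g q)) x y)"
      using sum.image_gen[OF fK] by blast
    also have "\<dots> = (\<Sum>p\<in>g ` K. d p * mon n (fst p) (snd p) x y)"
      unfolding d_def sum_distrib_right by (intro sum.cong refl) auto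
    finally show "F x y * G x y = (\<Sum>(e,f)\<in>g ` K. d (e,f) * mon n e f x y)"
      by (simp add: case_prod_beta)
  qed
  show ?thesis unfolding PL_def
    using fK deg eq by (intro exI[of _ "g ` K"] exI[of _ d]) auto
qed

lemma PL_prod:
  assumes "finite A" "\<And>a. a \<in> A \<Longrightarrow> PL n (\<lambda>d. d \<le> D a) (F a)"
  shows "PL n (\<lambda>d. d \<le> (\<Sum>a\<in>A. D a)) (\<lambda>x y. \<Prod>a\<in>A. F a x y)"
  using assms
proof (induction A rule: finite_induct)
  case empty
  then show ?case by (simp add: PL_const)
next
  case (insert a A)
  have "PL n (\<lambda>d. d \<le> D a + (\<Sum>a\<in>A. D a)) (\<lambda>x y. F a x y * (\<Prod>a\<in>A. F a x y))"
    using insert by (intro PL_mult[of _ "\<lambda>d. d \<le> D a" _ "\<lambda>d. d \<le> (\<Sum>a\<in>A. D a)"]) auto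
  then show ?case using insert by simp
qed

lemma PL_prod_top:
  assumes "finite A" "\<And>a. a \<in> A \<Longrightarrow> PL n (\<lambda>d. d \<le> D a) (T a)"
    "\<And>a. a \<in> A \<Longrightarrow> PL n (\<lambda>d. d < D a) (L a)"
  shows "PL n (\<lambda>d. d < (\<Sum>a\<in>A. D a)) (\<lambda>x y. (\<Prod>a\<in>A. T a x y + L a x y) - (\<Prod>a\<in>A. T a x y))"
  using assms
proof (induction A rule: finite_induct)
  case empty
  then show ?case by (simp add: PL_zero)
next
  case (insert a A)
  have TL: "PL n (\<lambda>d. d \<le> D b) (\<lambda>x y. T b x y + L b x y)" if "b \<in> insert a A" for b
    using insert(4,5)[OF that] by (intro PL_add) (auto elim: PL_mono)
  have P1: "PL n (\<lambda>d. d \<le> (\<Sum>a\<in>A. D a)) (\<lambda>x y. \<Prod>a\<in>A. T a x y + L a x y)"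
    using insert TL by (intro PL_prod) auto
  have IH: "PL n (\<lambda>d. d < (\<Sum>a\<in>A. D a)) (\<lambda>x y. (\<Prod>a\<in>A. T a x y + L a x y) - (\<Prod>a\<in>A. T a x y))"
    using insert by auto
  have A1: "PL n (\<lambda>d. d < D a + (\<Sum>a\<in>A. D a)) (\<lambda>x y. T a x y * ((\<Prod>a\<in>A. T a x y + L a x y) - (\<Prod>a\<in>A. T a x y)))"
    using insert(4)[of a] IH by (intro PL_mult[of _ "\<lambda>d. d \<le> D a" _ "\<lambda>d. d < (\<Sum>a\<in>A. D a)"]) auto
  have A2: "PL n (\<lambda>d. d < D a + (\<Sum>a\<in>A. D a)) (\<lambda>x y. L a x y * (\<Prod>a\<in>A. T a x y + L a x y))"
    using insert(5)[of a] P1 by (intro PL_mult[of _ "\<lambda>d. d < D a" _ "\<lambda>d. d \<le> (\<Sum>a\<in>A. D a)"]) auto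
  have "PL n (\<lambda>d. d < D a + (\<Sum>a\<in>A. D a)) (\<lambda>x y. T a x y * ((\<Prod>a\<in>A. T a x y + L a x y) - (\<Prod>a\<in>A. T a x y)) + L a x y * (\<Prod>a\<in>A. T a x y + L a x y))"
    using A1 A2 by (rule PL_add)
  then show ?case using insert(1,2)
    by (simp add: algebra_simps)
qed


definition fl :: "nat \<Rightarrow> (nat \<times> nat) set \<Rightarrow> nat \<Rightarrow> nat \<Rightarrow> bool" where
  "fl m H r j = (ht_left m H r j \<noteq> ht_right m H r j)"
definition flips :: "nat \<Rightarrow> (nat \<times> nat) set \<Rightarrow> (nat \<times> nat) set" where
  "flips m H = {v\<in>ht_vert m. fl m H (fst v) (snd v)}"
definition idx :: "nat \<Rightarrow> nat \<Rightarrow> nat" where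
  "idx m r = min r (2*m+2-r)"
definition VI :: "nat \<Rightarrow> nat \<Rightarrow> (nat \<times> nat) set" where
  "VI m i = {v\<in>ht_vert m. idx m (fst v) = i}"
definition CJ :: "nat \<Rightarrow> nat \<Rightarrow> (nat \<times> nat) set" where
  "CJ m j = {v\<in>ht_vert m. snd v = j}"

lemma vtype_nz: "vtype L R U D \<noteq> 0 \<longleftrightarrow> (L = R \<and> U \<noteq> D) \<or> (L \<and> \<not>R \<and> U \<and> D) \<or> (\<not>L \<and> R \<and> \<not>U \<and> \<not>D)"
  unfolding vtype_def by (cases L; cases R; cases U; cases D) auto

lemma vweight_eq:
  assumes "vtype L R U D \<noteq> 0"
  shows "vweight a (vtype L R U D) z = (if L \<noteq> R then sig (a^2) else if R = U then sig (a*z) else sig (a * inverse z))"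
  using assms unfolding vtype_def vweight_def by (cases L; cases R; cases U; cases D) auto

lemma vert_iff: "(r,j) \<in> ht_vert m \<longleftrightarrow> (1 \<le> r \<and> r \<le> 2*m+1 \<and> 1 \<le> j \<and> j \<le> m) \<or> (j = m+1 \<and> m+2 \<le> r \<and> r \<le> 2*m+1)"
  unfolding ht_vert_def by auto

lemma finite_vert: "finite (ht_vert m)"
proof -
  have "ht_vert m \<subseteq> {1..2*m+1} \<times> {1..m+1}" unfolding ht_vert_def by auto
  then show ?thesis by (rule finite_subset) auto
qed

lemma state_valid:
  assumes "(H,V) \<in> ht_states m" "(r,j) \<in> ht_vert m"
  shows "vtype (ht_left m H r j) (ht_right m H r j) (ht_up m V r j) (ht_down m V r j) \<noteq> 0"
  using assms unfolding ht_states_def by auto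

lemma state_nf_UD:
  assumes "(H,V) \<in> ht_states m" "(r,j) \<in> ht_vert m"
  shows "\<not> fl m H r j \<longleftrightarrow> ht_up m V r j \<noteq> ht_down m V r j"
  using state_valid[OF assms] unfolding vtype_nz fl_def by auto

lemma row_noflip:
  assumes "\<forall>j\<in>{1..k}. \<not> fl m H r j" "1 \<le> k"
  shows "(r,k) \<in> H"
  using assms
proof (induction k)
  case 0
  then show ?case by simp
next
  case (Suc k)
  show ?case
  proof (cases "k = 0")
    case True
    then show ?thesis using Suc.prems by (auto simp: fl_def ht_left_def ht_right_def)
  next
    case False
    then have "(r,k) \<in> H" using Suc by auto
    moreover have "\<not> fl m H r (Suc k)" using Suc.prems by auto
    ultimately show ?thesis using False by (auto simp: fl_def ht_left_def ht_right_def)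
  qed
qed

lemma pair_flip:
  assumes st: "(H,V) \<in> ht_states m" and i: "i \<in> {1..m}"
  shows "\<exists>v\<in>VI m i. v \<in> flips m H"
proof (rule ccontr)
  assume "\<not> ?thesis"
  then have nf: "\<And>r j. (r,j) \<in> ht_vert m \<Longrightarrow> idx m r = i \<Longrightarrow> \<not> fl m H r j"
    unfolding VI_def flips_def by auto
  have "\<forall>j\<in>{1..m}. \<not> fl m H i j"
    using i by (intro ballI nf) (auto simp: vert_iff idx_def)
  then have "(i,m) \<in> H" using i by (intro row_noflip) auto
  then have "(2*m+2-i, m+1) \<notin> H" using st i unfolding ht_states_def by auto
  moreover have "\<forall>j\<in>{1..m+1}. \<not> fl m H (2*m+2-i) j"
    using i by (intro ballI nf) (auto simp: vert_iff idx_def)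
  then have "(2*m+2-i, m+1) \<in> H" by (intro row_noflip) auto
  ultimately show False by simp
qed

lemma col_flip:
  assumes st: "(H,V) \<in> ht_states m" and j: "j \<in> {1..m}"
  shows "\<exists>v\<in>CJ m j. v \<in> flips m H"
proof (rule ccontr)
  assume "\<not> ?thesis"
  then have nf: "\<And>r. (r,j) \<in> ht_vert m \<Longrightarrow> ht_up m V r j \<noteq> ht_down m V r j"
    using state_nf_UD[OF st] unfolding CJ_def flips_def by auto
  have vj: "\<And>r. 1 \<le> r \<Longrightarrow> r \<le> 2*m+1 \<Longrightarrow> (r,j) \<in> ht_vert m" using j by (auto simp: vert_iff)
  have up: "r \<le> 2*m+1 \<Longrightarrow> 1 \<le> r \<Longrightarrow> ht_up m V r j" for r
  proof (induction r)
    case 0 then show ?case by simp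
  next
    case (Suc r)
    show ?case
    proof (cases "r = 0")
      case True then show ?thesis by (simp add: ht_up_def)
    next
      case False
      then have u: "ht_up m V r j" using Suc by auto
      have "ht_up m V r j \<noteq> ht_down m V r j" using nf vj Suc.prems False by auto
      then have "\<not> ht_down m V r j" using u by simp
      then show ?thesis using Suc.prems by (auto simp: ht_down_def ht_up_def split: if_splits)
    qed
  qed
  have "ht_up m V (2*m+1) j" by (rule up) auto
  moreover have "ht_down m V (2*m+1) j" by (simp add: ht_down_def)
  moreover have "ht_up m V (2*m+1) j \<noteq> ht_down m V (2*m+1) j" using nf vj by auto
  ultimately show False by simp
qed

lemma VI_low: "i \<in> {1..m} \<Longrightarrow> VI m i = {i} \<times> {1..m} \<union> {2*m+2-i} \<times> {1..m+1}"
  unfolding VI_def by (auto simp: vert_iff idx_def)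

lemma VI_mid: "VI m (m+1) = {m+1} \<times> {1..m}"
  unfolding VI_def by (auto simp: vert_iff idx_def)

lemma CJ_low: "j \<in> {1..m} \<Longrightarrow> CJ m j = {1..2*m+1} \<times> {j}"
  unfolding CJ_def by (auto simp: vert_iff)

lemma CJ_mid: "CJ m (m+1) = {m+2..2*m+1} \<times> {m+1}"
  unfolding CJ_def by (auto simp: vert_iff)

lemma card_VI_low: "i \<in> {1..m} \<Longrightarrow> card (VI m i) = 2*m+1"
proof -
  assume i: "i \<in> {1..m}"
  have "card ({i} \<times> {1..m} \<union> {2*m+2-i} \<times> {1..m+1}) = card ({i} \<times> {1..m}) + card ({2*m+2-i} \<times> {1..m+1})"
    using i by (intro card_Un_disjoint) auto
  then show ?thesis using VI_low[OF i] by (simp add: card_cartesian_product)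
qed

lemma card_VI_mid: "card (VI m (m+1)) = m"
  unfolding VI_mid by (simp add: card_cartesian_product)

lemma card_CJ_low: "j \<in> {1..m} \<Longrightarrow> card (CJ m j) = 2*m+1"
  by (simp add: CJ_low card_cartesian_product)

lemma card_CJ_mid: "card (CJ m (m+1)) = m"
  unfolding CJ_mid by (simp add: card_cartesian_product)

lemma idx_range: "v \<in> ht_vert m \<Longrightarrow> idx m (fst v) \<in> {1..m+1}"
  by (cases v) (auto simp: vert_iff idx_def)

lemma snd_range: "v \<in> ht_vert m \<Longrightarrow> snd v \<in> {1..m+1}"
  by (cases v) (auto simp: vert_iff)


definition px :: "nat \<Rightarrow> nat \<Rightarrow> nat" where "px m i = (if i \<le> m then 2*m else m)"
definition NF :: "nat \<Rightarrow> (nat\<times>nat) set \<Rightarrow> (nat\<times>nat) set" where "NF m H = ht_vert m - flips m H"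
definition nfx :: "nat \<Rightarrow> (nat\<times>nat) set \<Rightarrow> nat \<Rightarrow> nat" where "nfx m H i = card {v\<in>NF m H. idx m (fst v) = i}"
definition nfy :: "nat \<Rightarrow> (nat\<times>nat) set \<Rightarrow> nat \<Rightarrow> nat" where "nfy m H j = card {v\<in>NF m H. snd v = j}"
definition RU :: "nat \<Rightarrow> (nat\<times>nat) set \<Rightarrow> (nat\<times>nat) set \<Rightarrow> nat\<times>nat \<Rightarrow> bool" where
  "RU m H V v = (ht_right m H (fst v) (snd v) = ht_up m V (fst v) (snd v))"
definition cv :: "complex \<Rightarrow> nat \<Rightarrow> (nat\<times>nat) set \<Rightarrow> (nat\<times>nat) set \<Rightarrow> nat\<times>nat \<Rightarrow> complex" where
  "cv a m H V v = (if RU m H V v then a else - inverse a)"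
definition wv where
  "wv a m H V v x y = vweight a (vtype (ht_left m H (fst v) (snd v)) (ht_right m H (fst v) (snd v))
      (ht_up m V (fst v) (snd v)) (ht_down m V (fst v) (snd v))) (ht_param m x y (fst v) (snd v))"
definition pref :: "nat \<Rightarrow> (nat\<Rightarrow>complex) \<Rightarrow> (nat\<Rightarrow>complex) \<Rightarrow> complex" where
  "pref m x y = (\<Prod>i=1..m+1. x i ^ px m i * y i ^ px m i)"
definition trm where
  "trm a m H V x y = pref m x y * (\<Prod>v\<in>ht_vert m. wv a m H V v x y)"
definition Tt where
  "Tt a m H V v x y = cv a m H V v * x (idx m (fst v))^2"
definition Lt where
  "Lt a m H V v x y = (if RU m H V v then - inverse a * y (snd v)^2 else a * y (snd v)^2)"

lemma finite_states: "finite (ht_states m)"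
proof -
  have "ht_states m \<subseteq> Pow (ht_vert m) \<times> Pow (ht_vert m)" unfolding ht_states_def by auto
  then show ?thesis by (rule finite_subset) (simp add: finite_vert)
qed

lemma pref_eq: "(\<Prod>i=1..m. x i ^ (2*m) * y i ^ (2*m)) * x (m+1) ^ m * y (m+1) ^ m = pref m x y"
proof -
  have "(\<Prod>i=1..m. x i ^ (2*m) * y i ^ (2*m)) = (\<Prod>i=1..m. x i ^ px m i * y i ^ px m i)"
    by (intro prod.cong refl) (auto simp: px_def)
  then show ?thesis unfolding pref_def by (simp add: prod.nat_ivl_Suc' px_def mult.commute mult.left_commute)
qed

lemma Zt_eq: "Zt_HT a m x y = (\<Sum>(H,V)\<in>ht_states m. trm a m H V x y)"
  unfolding Zt_HT_def Z_HT_def trm_def wv_def pref_eq[symmetric]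
  by (simp add: sum_distrib_left case_prod_beta)

lemma nfx_eq: "{v\<in>NF m H. idx m (fst v) = i} = VI m i - flips m H"
  unfolding NF_def VI_def by auto
lemma nfy_eq: "{v\<in>NF m H. snd v = j} = CJ m j - flips m H"
  unfolding NF_def CJ_def by auto

lemma finite_VI: "finite (VI m i)" unfolding VI_def using finite_vert by simp
lemma finite_CJ: "finite (CJ m j)" unfolding CJ_def using finite_vert by simp

lemma nfx_le:
  assumes st: "(H,V) \<in> ht_states m" and i: "i \<in> {1..m+1}"
  shows "nfx m H i \<le> px m i"
proof (cases "i \<le> m")
  case True
  then have i': "i \<in> {1..m}" using i by auto
  obtain v0 where v0: "v0 \<in> VI m i" "v0 \<in> flips m H" using pair_flip[OF st i'] by auto
  have "card (VI m i - flips m H) \<le> card (VI m i - {v0})"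
    using v0 by (intro card_mono) (auto simp: finite_VI)
  also have "\<dots> = 2*m" using v0 card_VI_low[OF i'] by (simp add: finite_VI)
  finally show ?thesis unfolding nfx_def nfx_eq px_def using True by simp
next
  case False
  then have "i = m+1" using i by auto
  moreover have "card (VI m (m+1) - flips m H) \<le> card (VI m (m+1))"
    by (intro card_mono) (auto simp: finite_VI)
  ultimately show ?thesis unfolding nfx_def nfx_eq px_def using card_VI_mid by simp
qed

lemma nfy_le:
  assumes st: "(H,V) \<in> ht_states m" and j: "j \<in> {1..m+1}"
  shows "nfy m H j \<le> px m j"
proof (cases "j \<le> m")
  case True
  then have j': "j \<in> {1..m}" using j by auto
  obtain v0 where v0: "v0 \<in> CJ m j" "v0 \<in> flips m H" using col_flip[OF st j'] by auto
  have "card (CJ m j - flips m H) \<le> card (CJ m j - {v0})"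
    using v0 by (intro card_mono) (auto simp: finite_CJ)
  also have "\<dots> = 2*m" using v0 card_CJ_low[OF j'] by (simp add: finite_CJ)
  finally show ?thesis unfolding nfy_def nfy_eq px_def using True by simp
next
  case False
  then have "j = m+1" using j by auto
  moreover have "card (CJ m (m+1) - flips m H) \<le> card (CJ m (m+1))"
    by (intro card_mono) (auto simp: finite_CJ)
  ultimately show ?thesis unfolding nfy_def nfy_eq px_def using card_CJ_mid by simp
qed

lemma finite_NF: "finite (NF m H)" unfolding NF_def using finite_vert by simp

lemma card_NF_x: "card (NF m H) = (\<Sum>i=1..m+1. nfx m H i)"
proof -
  have "(\<Sum>i\<in>{1..m+1}. \<Sum>v\<in>{v\<in>NF m H. idx m (fst v) = i}. (1::nat)) = (\<Sum>v\<in>NF m H. 1)"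
    using idx_range by (intro sum.group) (auto simp: finite_NF NF_def finite_vert)
  then show ?thesis unfolding nfx_def by simp
qed

lemma card_NF_y: "card (NF m H) = (\<Sum>j=1..m+1. nfy m H j)"
proof -
  have "(\<Sum>j\<in>{1..m+1}. \<Sum>v\<in>{v\<in>NF m H. snd v = j}. (1::nat)) = (\<Sum>v\<in>NF m H. 1)"
    using snd_range by (intro sum.group) (auto simp: finite_NF NF_def finite_vert)
  then show ?thesis unfolding nfy_def by simp
qed

lemma sum_px: "(\<Sum>i=1..m+1. px m i) = 2*m*m + m"
proof -
  have "(\<Sum>i=1..m. px m i) = (\<Sum>i=1..m. 2*m)" by (intro sum.cong refl) (auto simp: px_def)
  then show ?thesis by (simp add: px_def)
qed

lemma prod_group_pow:
  fixes g :: "nat\<times>nat \<Rightarrow> nat" and z :: "nat \<Rightarrow> complex"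
  assumes "finite A" "\<And>v. v \<in> A \<Longrightarrow> g v \<in> {1..m+1}"
  shows "(\<Prod>v\<in>A. z (g v)) = (\<Prod>i=1..m+1. z i ^ card {v\<in>A. g v = i})"
proof -
  have "(\<Prod>i\<in>{1..m+1}. \<Prod>v\<in>{v\<in>A. g v = i}. z (g v)) = (\<Prod>v\<in>A. z (g v))"
    using assms by (intro prod.group) auto
  moreover have "(\<Prod>v\<in>{v\<in>A. g v = i}. z (g v)) = z i ^ card {v\<in>A. g v = i}" for i
    by simp
  ultimately show ?thesis by simp
qed

lemma nf_weight:
  assumes st: "(H,V) \<in> ht_states m" and v: "v \<in> NF m H" and nz: "nzv (m+1) x y" and "a \<noteq> 0"
  shows "x (idx m (fst v)) * y (snd v) * wv a m H V v x y = Tt a m H V v x y + Lt a m H V v x y"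
proof -
  obtain r j where rj: "v = (r,j)" by (cases v)
  have vv: "(r,j) \<in> ht_vert m" and nfl: "\<not> fl m H r j" using v rj unfolding NF_def flips_def by auto
  have xi: "x (idx m r) \<noteq> 0" using idx_range[OF vv] nz unfolding nzv_def by auto
  have yj: "y j \<noteq> 0" using snd_range[OF vv] nz unfolding nzv_def by auto
  have pr: "ht_param m x y r j = x (idx m r) * inverse (y j)" unfolding ht_param_def idx_def by simp
  have w: "wv a m H V v x y = (if RU m H V v then sig (a * (x (idx m r) * inverse (y j))) else sig (a * inverse (x (idx m r) * inverse (y j))))"
    unfolding wv_def rj using vweight_eq[OF state_valid[OF st vv]] nfl pr unfolding fl_def RU_def by simp
  have alg1: "X*Y*sig(a*(X*inverse Y)) = a*X^2 + - inverse a * Y^2" if "X \<noteq> 0" "Y \<noteq> 0" for X Y :: complex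
    using that assms(4) by (simp add: sig_def field_simps power2_eq_square)
  have alg2: "X*Y*sig(a*inverse(X*inverse Y)) = - inverse a * X^2 + a * Y^2" if "X \<noteq> 0" "Y \<noteq> 0" for X Y :: complex
    using that assms(4) by (simp add: sig_def field_simps power2_eq_square)
  show ?thesis
    unfolding w using alg1[OF xi yj] alg2[OF xi yj] rj
    by (cases "RU m H V v") (simp_all add: Tt_def Lt_def cv_def)
qed

lemma flip_weight:
  assumes st: "(H,V) \<in> ht_states m" and v: "v \<in> flips m H"
  shows "wv a m H V v x y = sig (a^2)"
proof -
  obtain r j where rj: "v = (r,j)" by (cases v)
  have vv: "(r,j) \<in> ht_vert m" and nfl: "fl m H r j" using v rj unfolding flips_def by auto
  show ?thesis unfolding wv_def rj using vweight_eq[OF state_valid[OF st vv]] nfl unfolding fl_def by simp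
qed

lemma term_decomp:
  assumes st: "(H,V) \<in> ht_states m" and nz: "nzv (m+1) x y" and a: "a \<noteq> 0"
  shows "trm a m H V x y = sig (a^2) ^ card (flips m H) *
     mon (m+1) (\<lambda>i. px m i - nfx m H i) (\<lambda>i. px m i - nfy m H i) x y *
     (\<Prod>v\<in>NF m H. Tt a m H V v x y + Lt a m H V v x y)"
proof -
  have fsub: "flips m H \<subseteq> ht_vert m" unfolding flips_def by auto
  have "(\<Prod>v\<in>ht_vert m. wv a m H V v x y) = (\<Prod>v\<in>flips m H. wv a m H V v x y) * (\<Prod>v\<in>NF m H. wv a m H V v x y)"
    unfolding NF_def using prod.subset_diff[OF fsub finite_vert] by (simp add: mult.commute)
  also have "(\<Prod>v\<in>flips m H. wv a m H V v x y) = sig (a^2) ^ card (flips m H)"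
    using flip_weight[OF st] by simp
  finally have W: "(\<Prod>v\<in>ht_vert m. wv a m H V v x y) = sig (a^2) ^ card (flips m H) * (\<Prod>v\<in>NF m H. wv a m H V v x y)" .
  have px1: "x i ^ px m i = x i ^ (px m i - nfx m H i) * x i ^ nfx m H i" if "i \<in> {1..m+1}" for i
    using nfx_le[OF st that] by (simp add: power_add[symmetric])
  have py1: "y i ^ px m i = y i ^ (px m i - nfy m H i) * y i ^ nfy m H i" if "i \<in> {1..m+1}" for i
    using nfy_le[OF st that] by (simp add: power_add[symmetric])
  have "pref m x y = mon (m+1) (\<lambda>i. px m i - nfx m H i) (\<lambda>i. px m i - nfy m H i) x y *
      ((\<Prod>i=1..m+1. x i ^ nfx m H i) * (\<Prod>i=1..m+1. y i ^ nfy m H i))"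
  proof -
    have "pref m x y = (\<Prod>i=1..m+1. (x i ^ (px m i - nfx m H i) * y i ^ (px m i - nfy m H i)) * (x i ^ nfx m H i * y i ^ nfy m H i))"
      unfolding pref_def by (intro prod.cong refl) (simp add: px1 py1 algebra_simps)
    then show ?thesis unfolding mon_def prod.distrib by simp
  qed
  moreover have "(\<Prod>i=1..m+1. x i ^ nfx m H i) = (\<Prod>v\<in>NF m H. x (idx m (fst v)))"
    unfolding nfx_def by (rule prod_group_pow[symmetric]) (auto simp: finite_vert NF_def dest!: idx_range)
  moreover have "(\<Prod>i=1..m+1. y i ^ nfy m H i) = (\<Prod>v\<in>NF m H. y (snd v))"
    unfolding nfy_def by (rule prod_group_pow[symmetric]) (auto simp: finite_vert NF_def dest!: snd_range)
  ultimately have P: "pref m x y = mon (m+1) (\<lambda>i. px m i - nfx m H i) (\<lambda>i. px m i - nfy m H i) x y *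
      (\<Prod>v\<in>NF m H. x (idx m (fst v)) * y (snd v))"
    by (simp add: prod.distrib)
  have "(\<Prod>v\<in>NF m H. x (idx m (fst v)) * y (snd v)) * (\<Prod>v\<in>NF m H. wv a m H V v x y)
      = (\<Prod>v\<in>NF m H. Tt a m H V v x y + Lt a m H V v x y)"
    unfolding prod.distrib[symmetric] using nf_weight[OF st _ nz a] by (intro prod.cong refl) auto
  then show ?thesis unfolding trm_def W P by (simp add: algebra_simps)
qed


definition topst :: "nat \<Rightarrow> (nat\<times>nat) set \<Rightarrow> bool" where
  "topst m H = (\<forall>i\<in>{1..m+1}. nfx m H i = px m i)"
definition tw where
  "tw a m H V = sig (a^2) ^ card (flips m H) * (\<Prod>v\<in>NF m H. cv a m H V v)"
definition Xm :: "nat \<Rightarrow> (nat\<Rightarrow>complex) \<Rightarrow> (nat\<Rightarrow>complex) \<Rightarrow> complex" where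
  "Xm m x y = mon (m+1) (\<lambda>i. 2 * px m i) (\<lambda>_. 0) x y"

lemma mon_cong: "(\<And>i. i \<in> {1..n} \<Longrightarrow> e i = e' i) \<Longrightarrow> (\<And>i. i \<in> {1..n} \<Longrightarrow> f i = f' i) \<Longrightarrow> mon n e f x y = mon n e' f' x y"
  unfolding mon_def by (intro prod.cong refl) auto

lemma degx_cong: "(\<And>i. i \<in> {1..n} \<Longrightarrow> e i = e' i) \<Longrightarrow> degx n e = degx n e'"
  unfolding degx_def by (intro sum.cong refl) auto

lemma mon_single_x: "i \<in> {1..n} \<Longrightarrow> mon n (\<lambda>k. if k = i then 2 else 0) (\<lambda>_. 0) x y = x i ^ 2"
proof -
  assume i: "i \<in> {1..n}"
  have "mon n (\<lambda>k. if k = i then 2 else 0) (\<lambda>_. 0) x y = (\<Prod>k\<in>{1..n}. if k = i then x k ^ 2 else 1)"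
    unfolding mon_def by (intro prod.cong refl) auto
  then show ?thesis using i by (simp add: prod.delta)
qed

lemma mon_single_y: "i \<in> {1..n} \<Longrightarrow> mon n (\<lambda>_. 0) (\<lambda>k. if k = i then 2 else 0) x y = y i ^ 2"
proof -
  assume i: "i \<in> {1..n}"
  have "mon n (\<lambda>_. 0) (\<lambda>k. if k = i then 2 else 0) x y = (\<Prod>k\<in>{1..n}. if k = i then y k ^ 2 else 1)"
    unfolding mon_def by (intro prod.cong refl) auto
  then show ?thesis using i by (simp add: prod.delta)
qed

lemma mon_mult_0: "mon n e f x y * mon n e' (\<lambda>_. 0) x y = mon n (\<lambda>i. e i + e' i) f x y"
  unfolding mon_mult by simp

lemma degx_single: "i \<in> {1..n} \<Longrightarrow> degx n (\<lambda>k. if k = i then 2 else 0) = 2"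
  unfolding degx_def by (simp add: sum.delta)

lemma PL_Tt: "v \<in> ht_vert m \<Longrightarrow> PL (m+1) (\<lambda>d. d \<le> 2) (Tt a m H V v)"
proof -
  assume v: "v \<in> ht_vert m"
  let ?i = "idx m (fst v)"
  have i: "?i \<in> {1..m+1}" using idx_range[OF v] .
  have "PL (m+1) (\<lambda>d. d \<le> 2) (\<lambda>x y. cv a m H V v * mon (m+1) (\<lambda>k. if k = ?i then 2 else 0) (\<lambda>_. 0) x y)"
    using degx_single[OF i] by (intro PL_scale PL_mon) simp
  then show ?thesis
    by (rule PL_cong) (use mon_single_x[OF i] in \<open>simp add: Tt_def\<close>)
qed

lemma PL_Lt: "v \<in> ht_vert m \<Longrightarrow> PL (m+1) (\<lambda>d. d < 2) (Lt a m H V v)"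
proof -
  assume v: "v \<in> ht_vert m"
  let ?j = "snd v"
  have j: "?j \<in> {1..m+1}" using snd_range[OF v] .
  have "PL (m+1) (\<lambda>d. d < 2) (\<lambda>x y. (if RU m H V v then - inverse a else a) * mon (m+1) (\<lambda>_. 0) (\<lambda>k. if k = ?j then 2 else 0) x y)"
    by (intro PL_scale PL_mon) (simp add: degx_zero)
  then show ?thesis
    by (rule PL_cong) (use mon_single_y[OF j] in \<open>simp add: Lt_def\<close>)
qed

lemma prodT:
  "(\<Prod>v\<in>NF m H. Tt a m H V v x y) = (\<Prod>v\<in>NF m H. cv a m H V v) * mon (m+1) (\<lambda>i. 2 * nfx m H i) (\<lambda>_. 0) x y"
proof -
  have "(\<Prod>v\<in>NF m H. x (idx m (fst v))) = (\<Prod>i=1..m+1. x i ^ nfx m H i)"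
    unfolding nfx_def by (rule prod_group_pow) (auto simp: finite_vert NF_def finite_NF dest!: idx_range)
  then have "(\<Prod>v\<in>NF m H. x (idx m (fst v))^2) = (\<Prod>i=1..m+1. x i ^ nfx m H i)^2"
    by (simp only: prod_power_distrib[symmetric])
  also have "\<dots> = (\<Prod>i=1..m+1. x i ^ (2 * nfx m H i))"
    unfolding prod_power_distrib by (rule prod.cong[OF refl]) (simp add: power_mult[symmetric] mult.commute)
  finally have "(\<Prod>v\<in>NF m H. x (idx m (fst v))^2) = (\<Prod>i=1..m+1. x i ^ (2 * nfx m H i))" .
  then show ?thesis unfolding Tt_def mon_def prod.distrib by simp
qed

lemma state_PL:
  assumes st: "(H,V) \<in> ht_states m" and a: "a \<noteq> 0"
  shows "PL (m+1) (\<lambda>d. d < 4*m*m + 2*m)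
     (\<lambda>x y. trm a m H V x y - (if topst m H then tw a m H V * Xm m x y else 0))"
proof -
  define N where "N = card (NF m H)"
  define ex where "ex i = px m i - nfx m H i" for i
  define fy where "fy i = px m i - nfy m H i" for i
  define F where "F = card (flips m H)"
  define Rest where "Rest x y = (\<Prod>v\<in>NF m H. Tt a m H V v x y + Lt a m H V v x y) - (\<Prod>v\<in>NF m H. Tt a m H V v x y)" for x y
  have nfxle: "\<And>i. i \<in> {1..m+1} \<Longrightarrow> nfx m H i \<le> px m i" using nfx_le[OF st] .
  have nfyle: "\<And>i. i \<in> {1..m+1} \<Longrightarrow> nfy m H i \<le> px m i" using nfy_le[OF st] .
  have NS: "N = (\<Sum>i=1..m+1. nfx m H i)" unfolding N_def by (rule card_NF_x)
  have NSy: "N = (\<Sum>i=1..m+1. nfy m H i)" unfolding N_def by (rule card_NF_y)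
  have Nle: "N \<le> 2*m*m + m" unfolding NS sum_px[symmetric] using nfxle by (intro sum_mono) auto
  have degex: "degx (m+1) ex + N = 2*m*m + m"
  proof -
    have "degx (m+1) ex + N = (\<Sum>i=1..m+1. ex i + nfx m H i)" unfolding degx_def NS by (simp add: sum.distrib)
    also have "\<dots> = (\<Sum>i=1..m+1. px m i)" unfolding ex_def using nfxle by (intro sum.cong refl) auto
    finally show ?thesis using sum_px by simp
  qed
  have fin: "finite (NF m H)" by (rule finite_NF)
  have PRest: "PL (m+1) (\<lambda>d. d < (\<Sum>v\<in>NF m H. 2)) Rest"
    unfolding Rest_def using PL_Tt PL_Lt fin by (intro PL_prod_top) (auto simp: NF_def)
  have P2: "PL (m+1) (\<lambda>d. d < 4*m*m + 2*m) (\<lambda>x y. sig (a^2)^F * (mon (m+1) ex fy x y * Rest x y))"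
  proof (intro PL_scale PL_mult[OF PL_mon[of "\<lambda>d. d \<le> degx (m+1) ex"] PRest])
    show "degx (m+1) ex \<le> degx (m+1) ex" by simp
    fix d1 d2 assume "d1 \<le> degx (m+1) ex" "d2 < (\<Sum>v\<in>NF m H. 2::nat)"
    then show "d1 + d2 < 4*m*m + 2*m" using degex Nle unfolding N_def by simp
  qed
  have eq: "trm a m H V x y = sig (a^2)^F * (\<Prod>v\<in>NF m H. cv a m H V v) * mon (m+1) (\<lambda>i. ex i + 2 * nfx m H i) fy x y
       + sig (a^2)^F * (mon (m+1) ex fy x y * Rest x y)" if nz: "nzv (m+1) x y" for x y
    unfolding term_decomp[OF st nz a] Rest_def prodT F_def ex_def[symmetric] fy_def[symmetric]
    by (simp add: mon_mult_0[symmetric] algebra_simps)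
  show ?thesis
  proof (cases "topst m H")
    case True
    then have nf: "\<And>i. i \<in> {1..m+1} \<Longrightarrow> nfx m H i = px m i" unfolding topst_def by auto
    have N2: "N = 2*m*m + m" unfolding NS sum_px[symmetric] using nf by (intro sum.cong refl) auto
    have nfy: "nfy m H i = px m i" if i: "i \<in> {1..m+1}" for i
    proof (rule ccontr)
      assume "nfy m H i \<noteq> px m i"
      then have "nfy m H i < px m i" using nfyle[OF i] by simp
      then have "(\<Sum>i=1..m+1. nfy m H i) < (\<Sum>i=1..m+1. px m i)"
        using i nfyle by (intro sum_strict_mono_ex1) auto
      then show False using NSy N2 sum_px by simp
    qed
    have "mon (m+1) (\<lambda>i. ex i + 2 * nfx m H i) fy x y = Xm m x y" for x y
      unfolding Xm_def using nf nfy by (intro mon_cong) (auto simp: ex_def fy_def)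
    then have "\<And>x y. nzv (m+1) x y \<Longrightarrow> sig (a^2)^F * (mon (m+1) ex fy x y * Rest x y) =
        trm a m H V x y - (if topst m H then tw a m H V * Xm m x y else 0)"
      using eq True unfolding tw_def F_def by simp
    then show ?thesis using P2 by (rule PL_cong[rotated])
  next
    case False
    then obtain i where i: "i \<in> {1..m+1}" "nfx m H i \<noteq> px m i" unfolding topst_def by auto
    then have "nfx m H i < px m i" using nfxle by force
    then have Nlt: "N < 2*m*m + m" unfolding NS sum_px[symmetric] using i nfxle
      by (intro sum_strict_mono_ex1) auto
    have dg: "degx (m+1) (\<lambda>i. ex i + 2 * nfx m H i) = degx (m+1) ex + 2 * N"
      unfolding degx_add NS by (simp add: degx_def sum_distrib_left)
    have P1: "PL (m+1) (\<lambda>d. d < 4*m*m + 2*m) (\<lambda>x y. sig (a^2)^F * (\<Prod>v\<in>NF m H. cv a m H V v) * mon (m+1) (\<lambda>i. ex i + 2 * nfx m H i) fy x y)"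
      using dg degex Nlt by (intro PL_scale PL_mon) simp
    have "PL (m+1) (\<lambda>d. d < 4*m*m + 2*m) (\<lambda>x y. sig (a^2)^F * (\<Prod>v\<in>NF m H. cv a m H V v) * mon (m+1) (\<lambda>i. ex i + 2 * nfx m H i) fy x y
       + sig (a^2)^F * (mon (m+1) ex fy x y * Rest x y))"
      using P1 P2 by (rule PL_add)
    then show ?thesis by (rule PL_cong) (use eq False in simp)
  qed
qed


lemma prod_row: "(\<Prod>v\<in>{r} \<times> A. g v) = (\<Prod>j\<in>A. g (r,j))"
proof -
  have "{r} \<times> A = (\<lambda>j. (r,j)) ` A" by auto
  moreover have "inj_on (\<lambda>j. (r,j)) A" by (auto simp: inj_on_def)
  ultimately show ?thesis by (simp add: prod.reindex)
qed

lemma prod_vert: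
  fixes g :: "nat \<times> nat \<Rightarrow> complex"
  shows "(\<Prod>v\<in>ht_vert m. g v) =
    (\<Prod>i=1..m. (\<Prod>j=1..m. g (i,j)) * (\<Prod>j=1..m. g (2*m+2-i,j)) * g (2*m+2-i, m+1)) * (\<Prod>j=1..m. g (m+1,j))"
proof -
  have "(\<Prod>i\<in>{1..m+1}. \<Prod>v\<in>{v\<in>ht_vert m. idx m (fst v) = i}. g v) = (\<Prod>v\<in>ht_vert m. g v)"
    using finite_vert idx_range by (intro prod.group) auto
  then have "(\<Prod>v\<in>ht_vert m. g v) = (\<Prod>i\<in>{1..m+1}. \<Prod>v\<in>VI m i. g v)" unfolding VI_def by simp
  also have "\<dots> = (\<Prod>i\<in>{1..m}. \<Prod>v\<in>VI m i. g v) * (\<Prod>v\<in>VI m (m+1). g v)"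
    by (simp add: prod.nat_ivl_Suc')
  also have "(\<Prod>v\<in>VI m (m+1). g v) = (\<Prod>j=1..m. g (m+1,j))" unfolding VI_mid prod_row ..
  also have "(\<Prod>i\<in>{1..m}. \<Prod>v\<in>VI m i. g v) = (\<Prod>i=1..m. (\<Prod>j=1..m. g (i,j)) * (\<Prod>j=1..m. g (2*m+2-i,j)) * g (2*m+2-i, m+1))"
  proof (rule prod.cong[OF refl])
    fix i assume i: "i \<in> {1..m}"
    have "(\<Prod>v\<in>VI m i. g v) = (\<Prod>v\<in>{i} \<times> {1..m}. g v) * (\<Prod>v\<in>{2*m+2-i} \<times> {1..m+1}. g v)"
      unfolding VI_low[OF i] using i by (intro prod.union_disjoint) auto
    also have "(\<Prod>v\<in>{2*m+2-i} \<times> {1..m+1}. g v) = (\<Prod>j=1..m. g (2*m+2-i,j)) * g (2*m+2-i, m+1)"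
      unfolding prod_row by (simp add: prod.nat_ivl_Suc')
    finally show "(\<Prod>v\<in>VI m i. g v) = (\<Prod>j=1..m. g (i,j)) * (\<Prod>j=1..m. g (2*m+2-i,j)) * g (2*m+2-i, m+1)"
      unfolding prod_row by (simp add: mult.assoc)
  qed
  finally show ?thesis .
qed

lemma pair_prod:
  fixes F :: "nat \<Rightarrow> nat \<Rightarrow> complex"
  assumes "finite I"
  shows "(\<Prod>i\<in>I. \<Prod>k\<in>I-{i}. F i k) = (\<Prod>i\<in>I. \<Prod>k\<in>{k\<in>I. i < k}. F i k * F k i)"
proof -
  have split: "(\<Prod>k\<in>I-{i}. F i k) = (\<Prod>k\<in>{k\<in>I. i < k}. F i k) * (\<Prod>k\<in>{k\<in>I. k < i}. F i k)" for i
  proof -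
    have e: "I - {i} = {k\<in>I. i < k} \<union> {k\<in>I. k < i}" by auto
    have "(\<Prod>k\<in>{k\<in>I. i < k} \<union> {k\<in>I. k < i}. F i k) = (\<Prod>k\<in>{k\<in>I. i < k}. F i k) * (\<Prod>k\<in>{k\<in>I. k < i}. F i k)"
      using assms by (intro prod.union_disjoint) auto
    then show ?thesis unfolding e .
  qed
  have sw: "(\<Prod>i\<in>I. \<Prod>k\<in>{k\<in>I. k < i}. F i k) = (\<Prod>k\<in>I. \<Prod>i\<in>{i\<in>I. k < i}. F i k)"
    using prod.swap_restrict[OF assms assms, of "\<lambda>i k. F i k" "\<lambda>i k. k < i"] by simp
  show ?thesis unfolding split prod.distrib sw by simp
qed

locale pset =
  fixes m :: nat and xs :: "nat list" and B :: "nat set"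
  assumes xs: "xs \<in> permutations_of_set {1..m}" and B: "B \<subseteq> {1..m}"
begin

definition pi :: "nat \<Rightarrow> nat" where "pi i = xs ! (i - 1)"
definition rho :: "nat \<Rightarrow> nat" where "rho i = (if i \<in> B then 2*m+2-i else i)"
definition Hp :: "(nat\<times>nat) set" where
  "Hp = {(r,j)\<in>ht_vert m. (r \<le> m \<and> (r \<in> B \<or> j < pi r)) \<or> r = m+1 \<or> (m+2 \<le> r \<and> (2*m+2-r \<notin> B \<or> j < pi (2*m+2-r)))}"
definition Vp :: "(nat\<times>nat) set" where
  "Vp = {(r,j)\<in>ht_vert m. 2 \<le> r \<and> j \<le> m \<and> (\<exists>i\<in>{1..m}. pi i = j \<and> r \<le> rho i)}"
definition Ds :: "(nat\<times>nat) set" where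
  "Ds = (\<lambda>i. (rho i, pi i)) ` {1..m}"

lemma set_xs: "set xs = {1..m}" and dist_xs: "distinct xs"
  using xs unfolding permutations_of_set_def by auto

lemma len: "length xs = m"
proof -
  have "length xs = card (set xs)" using dist_xs by (simp add: distinct_card)
  then show ?thesis using set_xs by simp
qed

lemma pi_range: "i \<in> {1..m} \<Longrightarrow> pi i \<in> {1..m}"
proof -
  assume i: "i \<in> {1..m}"
  then have "xs ! (i-1) \<in> set xs" using len by (intro nth_mem) auto
  then show ?thesis using set_xs unfolding pi_def by simp
qed

lemma pi_inj: "i \<in> {1..m} \<Longrightarrow> k \<in> {1..m} \<Longrightarrow> pi i = pi k \<Longrightarrow> i = k"
proof -
  assume "i \<in> {1..m}" "k \<in> {1..m}" "pi i = pi k"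
  then have "i - 1 = k - 1" using nth_eq_iff_index_eq[OF dist_xs, of "i-1" "k-1"] len unfolding pi_def by auto
  then show "i = k" using \<open>i \<in> {1..m}\<close> \<open>k \<in> {1..m}\<close> by auto
qed

lemma pi_surj: "j \<in> {1..m} \<Longrightarrow> \<exists>i\<in>{1..m}. pi i = j"
proof -
  assume j: "j \<in> {1..m}"
  then have "j \<in> set xs" using set_xs by simp
  then obtain k where k: "k < length xs" "xs ! k = j" by (auto simp: in_set_conv_nth)
  then show ?thesis using len by (intro bexI[of _ "Suc k"]) (auto simp: pi_def)
qed

lemma pi_bij: "bij_betw pi {1..m} {1..m}"
proof (rule bij_betw_imageI)
  show "inj_on pi {1..m}" using pi_inj by (auto simp: inj_on_def)
  show "pi ` {1..m} = {1..m}" using pi_range pi_surj by force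
qed

lemma rho_range: "i \<in> {1..m} \<Longrightarrow> 1 \<le> rho i \<and> rho i \<le> 2*m+1"
  unfolding rho_def by auto

lemma idx_rho: "i \<in> {1..m} \<Longrightarrow> idx m (rho i) = i"
  unfolding rho_def idx_def by auto

lemma R_Hp: "(r,j) \<in> ht_vert m \<Longrightarrow> ht_right m Hp r j =
   ((r \<le> m \<and> (r \<in> B \<or> j < pi r)) \<or> r = m+1 \<or> (m+2 \<le> r \<and> (2*m+2-r \<notin> B \<or> j < pi (2*m+2-r))))"
  unfolding ht_right_def Hp_def by auto

lemma L_Hp: assumes v: "(r,j) \<in> ht_vert m" shows "ht_left m Hp r j =
   ((r \<le> m \<and> (r \<in> B \<or> j \<le> pi r)) \<or> r = m+1 \<or> (m+2 \<le> r \<and> (2*m+2-r \<notin> B \<or> j \<le> pi (2*m+2-r))))"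
proof (cases "j = 1")
  case True
  have "r \<le> m \<Longrightarrow> 1 \<le> pi r" using v pi_range[of r] by (auto simp: vert_iff)
  moreover have "m+2 \<le> r \<Longrightarrow> 1 \<le> pi (2*m+2-r)"
  proof -
    assume "m+2 \<le> r"
    then have "2*m+2-r \<in> {1..m}" using v by (auto simp: vert_iff)
    then show ?thesis using pi_range by auto
  qed
  ultimately show ?thesis using True v by (cases "r \<le> m"; cases "r = m+1") (auto simp: ht_left_def vert_iff)
next
  case False
  then have v': "(r,j-1) \<in> ht_vert m" using v by (auto simp: vert_iff)
  have "ht_left m Hp r j = ht_right m Hp r (j-1)" using False by (simp add: ht_left_def ht_right_def)
  then show ?thesis unfolding R_Hp[OF v'] using False v by (auto simp: vert_iff)
qed

lemma Vp_col: "k \<in> {1..m} \<Longrightarrow> 1 \<le> r \<Longrightarrow> r \<le> 2*m+1 \<Longrightarrow> (r, pi k) \<in> Vp \<longleftrightarrow> 2 \<le> r \<and> r \<le> rho k"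
proof -
  assume k: "k \<in> {1..m}" and r: "1 \<le> r" "r \<le> 2*m+1"
  have eqv: "\<And>i. i \<in> {1..m} \<Longrightarrow> pi i = pi k \<longleftrightarrow> i = k" using pi_inj k by blast
  have "(r, pi k) \<in> ht_vert m" using pi_range[OF k] r by (auto simp: vert_iff)
  moreover have "pi k \<le> m" using pi_range[OF k] by simp
  ultimately show ?thesis unfolding Vp_def using eqv k by auto
qed

lemma U_Vp: "k \<in> {1..m} \<Longrightarrow> 1 \<le> r \<Longrightarrow> r \<le> 2*m+1 \<Longrightarrow> ht_up m Vp r (pi k) = (r \<le> rho k)"
  using Vp_col[of k r] rho_range[of k] unfolding ht_up_def by auto

lemma D_Vp: "k \<in> {1..m} \<Longrightarrow> 1 \<le> r \<Longrightarrow> r \<le> 2*m+1 \<Longrightarrow> ht_down m Vp r (pi k) = (rho k \<le> r)"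
  using Vp_col[of k "r+1"] rho_range[of k] unfolding ht_down_def by auto

lemma U_Vp_last: "m+2 \<le> r \<Longrightarrow> ht_up m Vp r (m+1) = False"
  unfolding ht_up_def Vp_def by auto

lemma D_Vp_last: "ht_down m Vp r (m+1) = True"
  unfolding ht_down_def Vp_def by auto

lemma vert_cases:
  assumes "(r,j) \<in> ht_vert m"
  obtains (lastc) "j = m+1" "m+2 \<le> r" "r \<le> 2*m+1"
    | (col) k where "k \<in> {1..m}" "j = pi k" "1 \<le> r" "r \<le> 2*m+1"
  using assms pi_surj[of j] by (auto simp: vert_iff)

lemma Ds_iff: "(r,j) \<in> Ds \<longleftrightarrow> (\<exists>k\<in>{1..m}. r = rho k \<and> j = pi k)"
  unfolding Ds_def by auto

lemma fl_Hp: assumes v: "(r,j) \<in> ht_vert m" shows "fl m Hp r j \<longleftrightarrow> (r,j) \<in> Ds"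
proof -
  have eq: "fl m Hp r j \<longleftrightarrow> ((r \<le> m \<and> r \<notin> B \<and> j = pi r) \<or> (m+2 \<le> r \<and> 2*m+2-r \<in> B \<and> j = pi (2*m+2-r)))"
    unfolding fl_def L_Hp[OF v] R_Hp[OF v] by auto
  show ?thesis
  proof
    assume "fl m Hp r j"
    then consider "r \<le> m" "r \<notin> B" "j = pi r" | "m+2 \<le> r" "2*m+2-r \<in> B" "j = pi (2*m+2-r)" using eq by auto
    then show "(r,j) \<in> Ds"
    proof cases
      case 1 then show ?thesis using v unfolding Ds_iff by (intro bexI[of _ r]) (auto simp: rho_def vert_iff)
    next
      case 2 then show ?thesis using v unfolding Ds_iff by (intro bexI[of _ "2*m+2-r"]) (auto simp: rho_def vert_iff)
    qed
  next
    assume "(r,j) \<in> Ds"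
    then obtain k where k: "k \<in> {1..m}" "r = rho k" "j = pi k" unfolding Ds_iff by auto
    show "fl m Hp r j"
      unfolding eq using k by (cases "k \<in> B") (auto simp: rho_def)
  qed
qed

lemma flips_Hp: "flips m Hp = Ds"
proof -
  have "Ds \<subseteq> ht_vert m"
    unfolding Ds_def using rho_range pi_range by (auto simp: vert_iff)
  then show ?thesis unfolding flips_def using fl_Hp by auto
qed

lemma valid_Hp:
  assumes v: "(r,j) \<in> ht_vert m"
  shows "vtype (ht_left m Hp r j) (ht_right m Hp r j) (ht_up m Vp r j) (ht_down m Vp r j) \<noteq> 0"
  using v
proof (cases rule: vert_cases)
  case lastc
  define i where "i = 2*m+2-r"
  have i: "i \<in> {1..m}" using lastc unfolding i_def atLeastAtMost_iff by arith
  then have p: "pi i \<le> m" using pi_range by auto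
  have nr: "\<not> r \<le> m" "r \<noteq> m+1" "m+2 \<le> r" using lastc by simp_all
  have L: "ht_left m Hp r (m+1) = (i \<notin> B)" using L_Hp[OF v] unfolding i_def[symmetric] lastc(1) using nr p by simp
  have R: "ht_right m Hp r (m+1) = (i \<notin> B)" using R_Hp[OF v] unfolding i_def[symmetric] lastc(1) using nr p by simp
  show ?thesis unfolding vtype_nz lastc(1) L R using U_Vp_last[OF nr(3)] D_Vp_last by simp
next
  case (col k)
  note U = U_Vp[OF col(1,3,4)] and D = D_Vp[OF col(1,3,4)]
  show ?thesis
  proof (cases "(r,j) \<in> Ds")
    case True
    then obtain k' where k': "k' \<in> {1..m}" "r = rho k'" "j = pi k'" unfolding Ds_iff by auto
    have "k' = k" by (rule pi_inj[OF k'(1) col(1)]) (simp only: k'(3)[symmetric] col(2)[symmetric])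
    then have rk: "r = rho k" using k' by simp
    have ineq: "r \<le> rho k" "rho k \<le> r" using rk by simp_all
    have UD: "ht_up m Vp r j" "ht_down m Vp r j" unfolding col(2) U D using ineq by simp_all
    have LR: "ht_left m Hp r j \<and> \<not> ht_right m Hp r j"
    proof (cases "k \<in> B")
      case kB: True
      have rr: "\<not> r \<le> m" "r \<noteq> m+1" "m+2 \<le> r" "2*m+2-r = k" using rk kB col(1) unfolding rho_def by auto
      show ?thesis using L_Hp[OF v] R_Hp[OF v] rr kB col(2) by simp
    next
      case kB: False
      have rr: "r \<le> m" "r = k" using rk kB col(1) unfolding rho_def by auto
      show ?thesis using L_Hp[OF v] R_Hp[OF v] rr kB col(2) by simp
    qed
    show ?thesis unfolding vtype_nz using UD LR by simp
  next
    case False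
    then have "\<not> fl m Hp r j" using fl_Hp[OF v] by simp
    moreover have "r \<noteq> rho k" using False col unfolding Ds_iff by auto
    ultimately show ?thesis unfolding vtype_nz fl_def col(2) U D by auto
  qed
qed

lemma Hp_iff: "(r,j) \<in> Hp \<longleftrightarrow> (r,j) \<in> ht_vert m \<and> ((r \<le> m \<and> (r \<in> B \<or> j < pi r)) \<or> r = m+1 \<or> (m+2 \<le> r \<and> (2*m+2-r \<notin> B \<or> j < pi (2*m+2-r))))"
  unfolding Hp_def by simp

lemma Hp_sub: "Hp \<subseteq> ht_vert m"
  unfolding Hp_def by (rule subsetI) (simp add: case_prod_beta)

lemma Vp_sub: "Vp \<subseteq> {v \<in> ht_vert m. 2 \<le> fst v}"
  unfolding Vp_def by (rule subsetI) (simp add: case_prod_beta)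

lemma state_Hp: "m \<ge> 1 \<Longrightarrow> (Hp, Vp) \<in> ht_states m"
proof -
  assume m: "m \<ge> 1"
  have "(m+1, m) \<in> Hp" unfolding Hp_iff using m by (simp add: vert_iff)
  moreover have "(m+2, m+1) \<notin> Vp" unfolding Vp_def by simp
  ultimately have g1: "((m+1, m) \<in> Hp) \<longleftrightarrow> (m+2, m+1) \<notin> Vp" by simp
  have g2: "\<forall>r\<in>{1..m}. ((r, m) \<in> Hp) \<longleftrightarrow> (2*m+2-r, m+1) \<notin> Hp"
  proof
    fix r assume r: "r \<in> {1..m}"
    have p: "pi r \<le> m" using pi_range[OF r] by simp
    have "(r, m) \<in> Hp \<longleftrightarrow> r \<in> B" unfolding Hp_iff using r p by (auto simp: vert_iff)
    moreover have "(2*m+2-r, m+1) \<in> Hp \<longleftrightarrow> r \<notin> B" unfolding Hp_iff using r p by (auto simp: vert_iff)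
    ultimately show "((r, m) \<in> Hp) \<longleftrightarrow> (2*m+2-r, m+1) \<notin> Hp" by simp
  qed
  have s3: "\<forall>(r,j)\<in>ht_vert m. vtype (ht_left m Hp r j) (ht_right m Hp r j) (ht_up m Vp r j) (ht_down m Vp r j) \<noteq> 0"
    using valid_Hp by blast
  show ?thesis unfolding ht_states_def
    using Hp_sub Vp_sub s3 g1 g2 by (intro CollectI) (simp only: case_prod_conv simp_thms)
qed


lemma Ds_vert: "Ds \<subseteq> ht_vert m"
  unfolding Ds_def using rho_range pi_range by (auto simp: vert_iff)

lemma VI_Ds: assumes i: "i \<in> {1..m}" shows "VI m i - Ds = VI m i - {(rho i, pi i)}"
proof -
  have "v \<in> Ds \<longleftrightarrow> v = (rho i, pi i)" if v: "v \<in> VI m i" for v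
  proof
    assume "v \<in> Ds"
    then obtain k where k: "k \<in> {1..m}" "v = (rho k, pi k)" unfolding Ds_def by auto
    then have "idx m (rho k) = i" using v unfolding VI_def by auto
    then have "k = i" using idx_rho[OF k(1)] by simp
    then show "v = (rho i, pi i)" using k by simp
  next
    assume "v = (rho i, pi i)"
    then show "v \<in> Ds" using i unfolding Ds_def by auto
  qed
  then show ?thesis by blast
qed

lemma VI_Ds_mid: "VI m (m+1) - Ds = VI m (m+1)"
proof -
  have "v \<notin> Ds" if v: "v \<in> VI m (m+1)" for v
  proof
    assume "v \<in> Ds"
    then obtain k where k: "k \<in> {1..m}" "v = (rho k, pi k)" unfolding Ds_def by auto
    then have "idx m (rho k) = m+1" using v unfolding VI_def by auto
    then show False using idx_rho[OF k(1)] k(1) by simp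
  qed
  then show ?thesis by blast
qed

lemma topst_Hp: "topst m Hp"
  unfolding topst_def nfx_def nfx_eq flips_Hp
proof
  fix i assume i: "i \<in> {1..m+1}"
  show "card (VI m i - Ds) = px m i"
  proof (cases "i \<le> m")
    case True
    then have i': "i \<in> {1..m}" using i by auto
    have "(rho i, pi i) \<in> VI m i" unfolding VI_def using Ds_vert idx_rho[OF i'] i' unfolding Ds_def by auto
    then have "card (VI m i - {(rho i, pi i)}) = 2*m" using card_VI_low[OF i'] finite_VI by simp
    then show ?thesis unfolding VI_Ds[OF i'] px_def using True by simp
  next
    case False
    then have "i = m+1" using i by auto
    then show ?thesis unfolding px_def using VI_Ds_mid card_VI_mid by simp
  qed
qed


definition sB :: "complex \<Rightarrow> nat \<Rightarrow> complex" where "sB a k = (if k \<in> B then a else - inverse a)"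
definition eB :: "complex \<Rightarrow> nat \<Rightarrow> complex" where "eB a k = (if k \<in> B then a^2 else inverse a ^ 2)"
definition tau :: "complex \<Rightarrow> nat \<times> nat \<Rightarrow> complex" where
  "tau a v = (if v \<in> Ds then sig (a^2) else cv a m Hp Vp v)"

lemma vert_top: "i \<in> {1..m} \<Longrightarrow> k \<in> {1..m} \<Longrightarrow> (i, pi k) \<in> ht_vert m"
  using pi_range[of k] by (auto simp: vert_iff)
lemma vert_bot: "i \<in> {1..m} \<Longrightarrow> k \<in> {1..m} \<Longrightarrow> (2*m+2-i, pi k) \<in> ht_vert m"
  using pi_range[of k] by (auto simp: vert_iff)

lemma cv_top: assumes i: "i \<in> {1..m}" and k: "k \<in> {1..m}"
  shows "cv a m Hp Vp (i, pi k) = (if (i \<in> B \<or> pi k < pi i) = (i \<le> rho k) then a else - inverse a)"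
proof -
  have R: "ht_right m Hp i (pi k) = (i \<in> B \<or> pi k < pi i)" using R_Hp[OF vert_top[OF i k]] i by simp
  have U: "ht_up m Vp i (pi k) = (i \<le> rho k)" using U_Vp[OF k, of i] i by simp
  show ?thesis unfolding cv_def RU_def fst_conv snd_conv R U ..
qed

lemma cv_bot: assumes i: "i \<in> {1..m}" and k: "k \<in> {1..m}"
  shows "cv a m Hp Vp (2*m+2-i, pi k) = (if (i \<notin> B \<or> pi k < pi i) = (2*m+2-i \<le> rho k) then a else - inverse a)"
proof -
  have e: "2*m+2-(2*m+2-i) = i" "\<not> 2*m+2-i \<le> m" "2*m+2-i \<noteq> m+1" "m+2 \<le> 2*m+2-i" using i by auto
  have R: "ht_right m Hp (2*m+2-i) (pi k) = (i \<notin> B \<or> pi k < pi i)" using R_Hp[OF vert_bot[OF i k]] e by simp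
  have rr: "1 \<le> 2*m+2-i" "2*m+2-i \<le> 2*m+1" using i by auto
  have U: "ht_up m Vp (2*m+2-i) (pi k) = (2*m+2-i \<le> rho k)" using U_Vp[OF k rr] .
  show ?thesis unfolding cv_def RU_def fst_conv snd_conv R U ..
qed

lemma tau_mid: assumes k: "k \<in> {1..m}" shows "tau a (m+1, pi k) = sB a k"
proof -
  have nD: "(m+1, pi k) \<notin> Ds"
  proof
    assume "(m+1, pi k) \<in> Ds"
    then obtain k' where "k' \<in> {1..m}" "m+1 = rho k'" unfolding Ds_iff by auto
    then show False unfolding rho_def by (auto split: if_splits)
  qed
  have v: "(m+1, pi k) \<in> ht_vert m" using pi_range[OF k] by (auto simp: vert_iff)
  have R: "ht_right m Hp (m+1) (pi k) = True" using R_Hp[OF v] by simp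
  have U: "ht_up m Vp (m+1) (pi k) = (k \<in> B)" using U_Vp[OF k, of "m+1"] k unfolding rho_def by auto
  show ?thesis unfolding tau_def using nD unfolding cv_def RU_def fst_conv snd_conv R U sB_def by simp
qed

lemma tau_last: assumes i: "i \<in> {1..m}" shows "tau a (2*m+2-i, m+1) = sB a i"
proof -
  have nD: "(2*m+2-i, m+1) \<notin> Ds"
  proof
    assume "(2*m+2-i, m+1) \<in> Ds"
    then obtain k' where "k' \<in> {1..m}" "m+1 = pi k'" unfolding Ds_iff by auto
    then show False using pi_range by fastforce
  qed
  have v: "(2*m+2-i, m+1) \<in> ht_vert m" using i by (auto simp: vert_iff)
  have e: "2*m+2-(2*m+2-i) = i" "\<not> 2*m+2-i \<le> m" "2*m+2-i \<noteq> m+1" "m+2 \<le> 2*m+2-i" using i by auto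
  have p: "\<not> m+1 < pi i" using pi_range[OF i] by simp
  have R: "ht_right m Hp (2*m+2-i) (m+1) = (i \<notin> B)" using R_Hp[OF v] e p by simp
  have U: "ht_up m Vp (2*m+2-i) (m+1) = False" using U_Vp_last e(4) by simp
  show ?thesis unfolding tau_def using nD unfolding cv_def RU_def fst_conv snd_conv R U sB_def by simp
qed

lemma Ds_top: assumes i: "i \<in> {1..m}" and k: "k \<in> {1..m}"
  shows "(i, pi k) \<in> Ds \<longleftrightarrow> k = i \<and> i \<notin> B"
proof
  assume "(i, pi k) \<in> Ds"
  then obtain k' where k': "k' \<in> {1..m}" "i = rho k'" "pi k = pi k'" unfolding Ds_iff by auto
  have "k = k'" by (rule pi_inj[OF k k'(1) k'(3)])
  then show "k = i \<and> i \<notin> B" using k' i unfolding rho_def by (auto split: if_splits)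
next
  assume "k = i \<and> i \<notin> B"
  then show "(i, pi k) \<in> Ds" unfolding Ds_iff using i unfolding rho_def by auto
qed

lemma Ds_bot: assumes i: "i \<in> {1..m}" and k: "k \<in> {1..m}"
  shows "(2*m+2-i, pi k) \<in> Ds \<longleftrightarrow> k = i \<and> i \<in> B"
proof
  assume "(2*m+2-i, pi k) \<in> Ds"
  then obtain k' where k': "k' \<in> {1..m}" "2*m+2-i = rho k'" "pi k = pi k'" unfolding Ds_iff by auto
  have "k = k'" by (rule pi_inj[OF k k'(1) k'(3)])
  moreover have "k' \<in> B" using k'(1,2) i unfolding rho_def by (auto split: if_splits)
  moreover have "i = k'" using k'(1,2) i \<open>k' \<in> B\<close> unfolding rho_def by simp arith
  ultimately show "k = i \<and> i \<in> B" by simp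
next
  assume "k = i \<and> i \<in> B"
  then show "(2*m+2-i, pi k) \<in> Ds" unfolding Ds_iff using i unfolding rho_def by auto
qed

lemma K_formula: assumes i: "i \<in> {1..m}" and k: "k \<in> {1..m}" and a: "a \<noteq> 0"
  shows "tau a (i, pi k) * tau a (2*m+2-i, pi k) =
    (if k = i then sig (a^2) * sB a i
     else if i < k then (if pi k < pi i then -1 else eB a i)
     else (if pi k < pi i then eB a k else -1))"
proof -
  have T: "tau a (i, pi k) = (if k = i \<and> i \<notin> B then sig (a^2) else (if (i \<in> B \<or> pi k < pi i) = (i \<le> rho k) then a else - inverse a))"
    unfolding tau_def Ds_top[OF i k] cv_top[OF i k] ..
  have Bt: "tau a (2*m+2-i, pi k) = (if k = i \<and> i \<in> B then sig (a^2) else (if (i \<notin> B \<or> pi k < pi i) = (2*m+2-i \<le> rho k) then a else - inverse a))"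
    unfolding tau_def Ds_bot[OF i k] cv_bot[OF i k] ..
  show ?thesis
  proof (cases "k = i")
    case True
    then show ?thesis unfolding T Bt rho_def sB_def using i by auto
  next
    case False
    then have pne: "pi k \<noteq> pi i" using pi_inj[OF k i] by blast
    have r1: "(i \<le> rho k) = (k \<in> B \<or> i < k)" using i k False unfolding rho_def by auto
    have r2: "(2*m+2-i \<le> rho k) = (k \<in> B \<and> k < i)" using i k False unfolding rho_def by auto
    show ?thesis
      unfolding T Bt r1 r2 eB_def using False pne a
      by (cases "i < k"; cases "pi k < pi i"; cases "i \<in> B"; cases "k \<in> B") (simp_all add: power2_eq_square)
  qed
qed


definition nn :: "nat \<Rightarrow> nat" where "nn i = card {k\<in>{1..m}. i < k \<and> pi i < pi k}"

definition Kf :: "complex \<Rightarrow> nat \<Rightarrow> nat \<Rightarrow> complex" where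
  "Kf a i k = (if k = i then sig (a^2) * sB a i
     else if i < k then (if pi k < pi i then -1 else eB a i)
     else (if pi k < pi i then eB a k else -1))"

lemma tw_tau: "tw a m Hp Vp = (\<Prod>v\<in>ht_vert m. tau a v)"
proof -
  have "(\<Prod>v\<in>ht_vert m. tau a v) = (\<Prod>v\<in>ht_vert m - Ds. tau a v) * (\<Prod>v\<in>Ds. tau a v)"
    using prod.subset_diff[OF Ds_vert finite_vert] by simp
  also have "(\<Prod>v\<in>Ds. tau a v) = sig (a^2) ^ card Ds" unfolding tau_def by simp
  also have "(\<Prod>v\<in>ht_vert m - Ds. tau a v) = (\<Prod>v\<in>ht_vert m - Ds. cv a m Hp Vp v)"
    unfolding tau_def by (intro prod.cong refl) auto
  finally show ?thesis unfolding tw_def NF_def flips_Hp by (simp add: mult.commute)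
qed

lemma pair_K: assumes i: "i \<in> {1..m}" and k: "k \<in> {1..m}" and ik: "i < k"
  shows "Kf a i k * Kf a k i = (if pi i < pi k then eB a i ^ 2 else 1)"
proof -
  have "pi k \<noteq> pi i" using pi_inj[OF k i] ik by auto
  then show ?thesis unfolding Kf_def using ik by (auto simp: power2_eq_square)
qed

lemma sB_eB: "a \<noteq> 0 \<Longrightarrow> sB a i ^ 3 * (eB a i ^ 2) ^ n = (if i \<in> B then a^(4*n+3) else - (inverse a ^ (4*n+3)))"
  unfolding sB_def eB_def
  by (auto simp: power_mult[symmetric] power_add[symmetric] mult.commute add.commute)

lemma tw_formula:
  assumes a: "a \<noteq> 0"
  shows "tw a m Hp Vp = sig (a^2) ^ m * (\<Prod>i=1..m. if i \<in> B then a^(4*nn i+3) else - (inverse a ^ (4*nn i+3)))"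
proof -
  have s1: "(\<Prod>j=1..m. tau a (i,j)) * (\<Prod>j=1..m. tau a (2*m+2-i,j)) = (\<Prod>k=1..m. Kf a i k)" if i: "i \<in> {1..m}" for i
  proof -
    have "(\<Prod>j=1..m. tau a (i,j)) * (\<Prod>j=1..m. tau a (2*m+2-i,j)) = (\<Prod>j=1..m. tau a (i,j) * tau a (2*m+2-i,j))"
      by (simp add: prod.distrib)
    also have "\<dots> = (\<Prod>k=1..m. tau a (i,pi k) * tau a (2*m+2-i,pi k))"
      using prod.reindex_bij_betw[OF pi_bij, of "\<lambda>j. tau a (i,j) * tau a (2*m+2-i,j)"] by simp
    also have "\<dots> = (\<Prod>k=1..m. Kf a i k)"
      unfolding Kf_def using K_formula[OF i _ a] by (intro prod.cong refl) auto
    finally show ?thesis .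
  qed
  have s2: "(\<Prod>j=1..m. tau a (m+1,j)) = (\<Prod>k=1..m. sB a k)"
  proof -
    have "(\<Prod>j=1..m. tau a (m+1,j)) = (\<Prod>k=1..m. tau a (m+1, pi k))"
      using prod.reindex_bij_betw[OF pi_bij, of "\<lambda>j. tau a (m+1,j)"] by simp
    also have "\<dots> = (\<Prod>k=1..m. sB a k)" using tau_mid by (intro prod.cong refl) auto
    finally show ?thesis .
  qed
  have s4: "(\<Prod>k=1..m. Kf a i k) = sig (a^2) * sB a i * (\<Prod>k\<in>{1..m}-{i}. Kf a i k)" if i: "i \<in> {1..m}" for i
    using prod.remove[of "{1..m}" i "Kf a i"] i unfolding Kf_def by simp
  have s5: "(\<Prod>i\<in>{1..m}. \<Prod>k\<in>{1..m}-{i}. Kf a i k) = (\<Prod>i=1..m. (eB a i ^ 2) ^ nn i)"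
  proof -
    have "(\<Prod>i\<in>{1..m}. \<Prod>k\<in>{1..m}-{i}. Kf a i k) = (\<Prod>i\<in>{1..m}. \<Prod>k\<in>{k\<in>{1..m}. i < k}. Kf a i k * Kf a k i)"
      by (rule pair_prod) simp
    also have "\<dots> = (\<Prod>i\<in>{1..m}. \<Prod>k\<in>{k\<in>{1..m}. i < k}. if pi i < pi k then eB a i ^ 2 else 1)"
      using pair_K by (intro prod.cong refl) auto
    also have "\<dots> = (\<Prod>i=1..m. (eB a i ^ 2) ^ nn i)"
    proof (rule prod.cong[OF refl])
      fix i assume i: "i \<in> {1..m}"
      have "(\<Prod>k\<in>{k\<in>{1..m}. i < k}. if pi i < pi k then eB a i ^ 2 else 1) = (\<Prod>k\<in>{k\<in>{k\<in>{1..m}. i < k}. pi i < pi k}. eB a i ^ 2)"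
        by (rule prod.inter_filter[symmetric]) simp
      also have "{k\<in>{k\<in>{1..m}. i < k}. pi i < pi k} = {k\<in>{1..m}. i < k \<and> pi i < pi k}" by auto
      finally show "(\<Prod>k\<in>{k\<in>{1..m}. i < k}. if pi i < pi k then eB a i ^ 2 else 1) = (eB a i ^ 2) ^ nn i"
        unfolding nn_def by simp
    qed
    finally show ?thesis .
  qed
  have "tw a m Hp Vp = (\<Prod>i=1..m. (\<Prod>k=1..m. Kf a i k) * sB a i) * (\<Prod>k=1..m. sB a k)"
    unfolding tw_tau prod_vert s2 using s1 tau_last by (intro arg_cong2[where f="(*)"] prod.cong refl) auto
  also have "\<dots> = (\<Prod>i=1..m. sig (a^2) * sB a i ^ 3 * (\<Prod>k\<in>{1..m}-{i}. Kf a i k))"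
    unfolding prod.distrib[symmetric] using s4 by (intro prod.cong refl) (simp add: algebra_simps power3_eq_cube)
  also have "\<dots> = sig (a^2) ^ m * (\<Prod>i=1..m. sB a i ^ 3) * (\<Prod>i=1..m. (eB a i ^ 2) ^ nn i)"
    by (simp only: prod.distrib prod_constant s5 card_atLeastAtMost diff_Suc_1)
  also have "\<dots> = sig (a^2) ^ m * (\<Prod>i=1..m. if i \<in> B then a^(4*nn i+3) else - (inverse a ^ (4*nn i+3)))"
    unfolding mult.assoc prod.distrib[symmetric] using sB_eB[OF a] by simp
  finally show ?thesis .
qed

end


lemma sumB:
  fixes f g :: "nat \<Rightarrow> complex"
  assumes "finite A"
  shows "(\<Sum>X\<in>Pow A. \<Prod>i\<in>A. if i \<in> X then f i else g i) = (\<Prod>i\<in>A. f i + g i)"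
proof -
  have "(\<Prod>i\<in>A. if i \<in> X then f i else g i) = (\<Prod>i\<in>X. f i) * (\<Prod>i\<in>A-X. g i)" if "X \<in> Pow A" for X
  proof -
    have "(\<Prod>i\<in>A. if i \<in> X then f i else g i) = (\<Prod>i\<in>A \<inter> {x. x \<in> X}. f i) * (\<Prod>i\<in>A \<inter> - {x. x \<in> X}. g i)"
      using assms by (rule prod.If_cases)
    moreover have "A \<inter> {x. x \<in> X} = X" "A \<inter> - {x. x \<in> X} = A - X" using that by auto
    ultimately show ?thesis by simp
  qed
  then show ?thesis using prod_add[OF assms, of f g] by simp
qed

definition cnt :: "nat list \<Rightarrow> nat \<Rightarrow> nat" where
  "cnt xs i = card {k. i < k \<and> k < length xs \<and> xs ! i < xs ! k}"

lemma card_shift: "card {k. 0 < k \<and> P k} = card {k. P (Suc k)}"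
proof -
  have "bij_betw Suc {k. P (Suc k)} {k. 0 < k \<and> P k}"
  proof (rule bij_betw_imageI)
    show "inj_on Suc {k. P (Suc k)}" by simp
    show "Suc ` {k. P (Suc k)} = {k. 0 < k \<and> P k}"
    proof
      show "Suc ` {k. P (Suc k)} \<subseteq> {k. 0 < k \<and> P k}" by auto
      show "{k. 0 < k \<and> P k} \<subseteq> Suc ` {k. P (Suc k)}"
      proof
        fix k assume "k \<in> {k. 0 < k \<and> P k}"
        then have "k = Suc (k - 1)" "P (Suc (k - 1))" by auto
        then show "k \<in> Suc ` {k. P (Suc k)}" by (metis imageI mem_Collect_eq)
      qed
    qed
  qed
  from bij_betw_same_card[OF this] show ?thesis by simp
qed

lemma cnt_Cons_Suc: "cnt (x # ys) (Suc i) = cnt ys i"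
proof -
  have "cnt (x # ys) (Suc i) = card {k. 0 < k \<and> (Suc i < k \<and> k < Suc (length ys) \<and> ys ! i < (x#ys) ! k)}"
    unfolding cnt_def by (intro arg_cong[where f=card]) auto
  also have "\<dots> = card {k. Suc i < Suc k \<and> Suc k < Suc (length ys) \<and> ys ! i < (x#ys) ! Suc k}"
    by (rule card_shift)
  also have "\<dots> = cnt ys i" unfolding cnt_def by simp
  finally show ?thesis .
qed

lemma cnt_Cons_0: "distinct ys \<Longrightarrow> cnt (x # ys) 0 = card {y\<in>set ys. x < y}"
proof -
  assume d: "distinct ys"
  have "cnt (x # ys) 0 = card {k. 0 < k \<and> (k < Suc (length ys) \<and> x < (x#ys) ! k)}"
    unfolding cnt_def by simp
  also have "\<dots> = card {k. Suc k < Suc (length ys) \<and> x < (x#ys) ! Suc k}"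
    by (rule card_shift)
  also have "\<dots> = card {k. k < length ys \<and> x < ys ! k}" by simp
  also have "\<dots> = card ((\<lambda>k. ys ! k) ` {k. k < length ys \<and> x < ys ! k})"
    using d by (intro card_image[symmetric]) (auto simp: inj_on_def nth_eq_iff_index_eq)
  also have "(\<lambda>k. ys ! k) ` {k. k < length ys \<and> x < ys ! k} = {y\<in>set ys. x < y}"
    by (auto simp: in_set_conv_nth)
  finally show ?thesis .
qed

lemma lw_cnt: "distinct xs \<Longrightarrow> lw h xs = (\<Prod>i<length xs. h (cnt xs i))"
proof (induction xs)
  case Nil
  then show ?case by simp
next
  case (Cons x ys)
  have "(\<Prod>i<length (x#ys). h (cnt (x#ys) i)) = h (cnt (x#ys) 0) * (\<Prod>i<length ys. h (cnt (x#ys) (Suc i)))"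
    unfolding length_Cons prod.lessThan_Suc_shift ..
  also have "\<dots> = h (card {y\<in>set ys. x < y}) * lw h ys"
    using Cons by (simp add: cnt_Cons_Suc cnt_Cons_0)
  finally show ?case by simp
qed

definition nnx :: "nat \<Rightarrow> nat list \<Rightarrow> nat \<Rightarrow> nat" where
  "nnx m xs i = card {k\<in>{1..m}. i < k \<and> xs ! (i-1) < xs ! (k-1)}"

lemma nnx_cnt: "length xs = m \<Longrightarrow> nnx m xs (Suc i) = cnt xs i"
proof -
  assume l: "length xs = m"
  have "nnx m xs (Suc i) = card {k. 0 < k \<and> (k \<le> m \<and> Suc i < k \<and> xs ! i < xs ! (k-1))}"
    unfolding nnx_def by (intro arg_cong[where f=card]) auto
  also have "\<dots> = card {k. Suc k \<le> m \<and> Suc i < Suc k \<and> xs ! i < xs ! k}"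
    by (subst card_shift) simp
  also have "\<dots> = cnt xs i" unfolding cnt_def using l by (intro arg_cong[where f=card]) auto
  finally show ?thesis .
qed

lemma prod_nnx: "xs \<in> permutations_of_set {1..m} \<Longrightarrow> (\<Prod>i=1..m. h (nnx m xs i)) = lw h xs"
proof -
  assume xs: "xs \<in> permutations_of_set {1..m}"
  then have d: "distinct xs" and s: "set xs = {1..m}" unfolding permutations_of_set_def by auto
  have l: "length xs = m" using distinct_card[OF d] s by simp
  have "(\<Prod>i=1..m. h (nnx m xs i)) = (\<Prod>i<m. h (nnx m xs (Suc i)))"
    by (simp add: prod.atLeast1_atMost_eq)
  also have "\<dots> = (\<Prod>i<m. h (cnt xs i))" using nnx_cnt[OF l] by simp
  also have "\<dots> = lw h xs" using lw_cnt[OF d, of h] l by simp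
  finally show ?thesis .
qed

lemma sum_W:
  fixes a :: complex
  assumes a: "a \<noteq> 0"
  shows "(\<Sum>xs\<in>permutations_of_set {1..m}. \<Sum>B\<in>Pow {1..m}.
      sig (a^2) ^ m * (\<Prod>i=1..m. if i \<in> B then a^(4*nnx m xs i+3) else - (inverse a ^ (4*nnx m xs i+3)))) = C_HT a m"
proof -
  have inner: "(\<Sum>B\<in>Pow {1..m}. sig (a^2) ^ m * (\<Prod>i=1..m. if i \<in> B then a^(4*nnx m xs i+3) else - (inverse a ^ (4*nnx m xs i+3))))
      = sig (a^2) ^ m * lw (\<lambda>k. sig (a^(4*k+3))) xs" if xs: "xs \<in> permutations_of_set {1..m}" for xs
  proof -
    have "(\<Sum>B\<in>Pow {1..m}. (\<Prod>i=1..m. if i \<in> B then a^(4*nnx m xs i+3) else - (inverse a ^ (4*nnx m xs i+3))))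
        = (\<Prod>i=1..m. a^(4*nnx m xs i+3) + - (inverse a ^ (4*nnx m xs i+3)))"
      by (rule sumB) simp
    also have "\<dots> = (\<Prod>i=1..m. sig (a^(4*nnx m xs i+3)))"
      unfolding sig_def by (simp add: power_inverse)
    also have "\<dots> = lw (\<lambda>k. sig (a^(4*k+3))) xs" by (rule prod_nnx[OF xs])
    finally show ?thesis by (simp add: sum_distrib_left[symmetric])
  qed
  have "(\<Sum>xs\<in>permutations_of_set {1..m}. \<Sum>B\<in>Pow {1..m}.
      sig (a^2) ^ m * (\<Prod>i=1..m. if i \<in> B then a^(4*nnx m xs i+3) else - (inverse a ^ (4*nnx m xs i+3))))
     = sig (a^2) ^ m * (\<Sum>xs\<in>permutations_of_set {1..m}. lw (\<lambda>k. sig (a^(4*k+3))) xs)"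
    using inner by (simp add: sum_distrib_left)
  also have "\<dots> = sig (a^2) ^ m * (\<Prod>p=1..m. \<Sum>k<p. sig (a^(4*k+3)))"
    using lehmer_sum[of "{1..m}" "\<lambda>k. sig (a^(4*k+3))"] by simp
  also have "\<dots> = C_HT a m" by (rule C_HT_alt[OF a])
  finally show ?thesis .
qed



lemma H_det:
  assumes st: "(H,V) \<in> ht_states m" and st': "(H',V') \<in> ht_states m" and F: "flips m H = flips m H'"
  shows "H = H'"
proof -
  have fl_eq: "fl m H r j = fl m H' r j" if "(r,j) \<in> ht_vert m" for r j
  proof -
    have "(r,j) \<in> flips m H \<longleftrightarrow> (r,j) \<in> flips m H'" using F by simp
    then show ?thesis using that unfolding flips_def by simp
  qed
  have main: "\<forall>r. (r,j) \<in> ht_vert m \<longrightarrow> ((r,j) \<in> H \<longleftrightarrow> (r,j) \<in> H')" for j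
  proof (induction j)
    case 0
    then show ?case by (simp add: vert_iff)
  next
    case (Suc j)
    show ?case
    proof (intro allI impI)
      fix r assume v: "(r, Suc j) \<in> ht_vert m"
      have L: "ht_left m H r (Suc j) = ht_left m H' r (Suc j)"
      proof (cases "j = 0")
        case True then show ?thesis by (simp add: ht_left_def)
      next
        case False
        then have "(r,j) \<in> ht_vert m" using v by (auto simp: vert_iff)
        then show ?thesis using Suc False by (simp add: ht_left_def)
      qed
      have "fl m H r (Suc j) = fl m H' r (Suc j)" using fl_eq[OF v] .
      then show "(r, Suc j) \<in> H \<longleftrightarrow> (r, Suc j) \<in> H'" using L unfolding fl_def ht_right_def by blast
    qed
  qed
  have "H \<subseteq> ht_vert m" "H' \<subseteq> ht_vert m" using st st' unfolding ht_states_def by auto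
  then show ?thesis using main by auto
qed

lemma V_det:
  assumes st: "(H,V) \<in> ht_states m" and st': "(H,V') \<in> ht_states m"
  shows "V = V'"
proof -
  have g: "((m+1, m) \<in> H) \<longleftrightarrow> (m+2, m+1) \<notin> V" "((m+1, m) \<in> H) \<longleftrightarrow> (m+2, m+1) \<notin> V'"
    using st st' unfolding ht_states_def by auto
  have main: "\<forall>j. (r,j) \<in> ht_vert m \<longrightarrow> ht_up m V r j = ht_up m V' r j" for r
  proof (induction r)
    case 0
    then show ?case by (simp add: vert_iff)
  next
    case (Suc r)
    show ?case
    proof (intro allI impI)
      fix j assume v: "(Suc r, j) \<in> ht_vert m"
      show "ht_up m V (Suc r) j = ht_up m V' (Suc r) j"
      proof (cases "r = 0")
        case True then show ?thesis by (simp add: ht_up_def)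
      next
        case r0: False
        show ?thesis
        proof (cases "(r,j) \<in> ht_vert m")
          case True
          have u: "ht_up m V r j = ht_up m V' r j" using Suc True by blast
          have "\<not> fl m H r j \<longleftrightarrow> ht_up m V r j \<noteq> ht_down m V r j" using state_nf_UD[OF st True] .
          moreover have "\<not> fl m H r j \<longleftrightarrow> ht_up m V' r j \<noteq> ht_down m V' r j" using state_nf_UD[OF st' True] .
          ultimately have d: "ht_down m V r j = ht_down m V' r j" using u by blast
          have "r \<noteq> 2*m+1" using v by (auto simp: vert_iff)
          then have "(Suc r, j) \<in> V \<longleftrightarrow> (Suc r, j) \<in> V'" using d by (simp add: ht_down_def)
          then show ?thesis by (simp add: ht_up_def)
        next
          case False
          then have "j = m+1" "Suc r = m+2" using v r0 by (auto simp: vert_iff)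
          then show ?thesis using g by (simp add: ht_up_def)
        qed
      qed
    qed
  qed
  have sub: "V \<subseteq> {v \<in> ht_vert m. 2 \<le> fst v}" "V' \<subseteq> {v \<in> ht_vert m. 2 \<le> fst v}"
    using st st' unfolding ht_states_def by auto
  show ?thesis
  proof (intro set_eqI)
    fix v :: "nat \<times> nat"
    obtain r j where v: "v = (r,j)" by (cases v)
    show "v \<in> V \<longleftrightarrow> v \<in> V'"
    proof (cases "(r,j) \<in> ht_vert m \<and> 2 \<le> r")
      case True
      then have "ht_up m V r j = ht_up m V' r j" using main by blast
      then show ?thesis using True v by (simp add: ht_up_def)
    next
      case False
      then show ?thesis using sub v by auto
    qed
  qed
qed

lemma topst_nfy:
  assumes st: "(H,V) \<in> ht_states m" and t: "topst m H" and j: "j \<in> {1..m+1}"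
  shows "nfy m H j = px m j"
proof (rule ccontr)
  assume ne: "nfy m H j \<noteq> px m j"
  have nf: "\<And>i. i \<in> {1..m+1} \<Longrightarrow> nfx m H i = px m i" using t unfolding topst_def by auto
  have "card (NF m H) = (\<Sum>i=1..m+1. px m i)" unfolding card_NF_x using nf by (intro sum.cong refl) auto
  moreover have "nfy m H j < px m j" using nfy_le[OF st j] ne by simp
  then have "(\<Sum>i=1..m+1. nfy m H i) < (\<Sum>i=1..m+1. px m i)"
    using j nfy_le[OF st] by (intro sum_strict_mono_ex1) auto
  ultimately show False using card_NF_y by simp
qed

lemma pset_Ds_inj:
  assumes p1: "pset m xs B" and p2: "pset m xs' B'" and eq: "pset.Ds m xs B = pset.Ds m xs' B'"
  shows "xs = xs' \<and> B = B'"
proof -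
  have key: "pset.rho m B i = pset.rho m B' i \<and> pset.pi xs i = pset.pi xs' i" if i: "i \<in> {1..m}" for i
  proof -
    have "(pset.rho m B i, pset.pi xs i) \<in> pset.Ds m xs B"
      using i unfolding pset.Ds_def[OF p1] by auto
    then have "(pset.rho m B i, pset.pi xs i) \<in> pset.Ds m xs' B'" using eq by simp
    then obtain k where k: "k \<in> {1..m}" "pset.rho m B i = pset.rho m B' k" "pset.pi xs i = pset.pi xs' k"
      unfolding pset.Ds_def[OF p2] by auto
    have "i = k" using pset.idx_rho[OF p1 i] pset.idx_rho[OF p2 k(1)] k(2) by simp
    then show ?thesis using k by simp
  qed
  have l: "length xs = m" "length xs' = m" using pset.len[OF p1] pset.len[OF p2] .
  have "xs = xs'"
  proof (rule nth_equalityI)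
    show "length xs = length xs'" using l by simp
    fix n assume n: "n < length xs"
    then have "Suc n \<in> {1..m}" using l by simp
    then show "xs ! n = xs' ! n" using key unfolding pset.pi_def[OF p1] pset.pi_def[OF p2] by fastforce
  qed
  moreover have "B = B'"
  proof -
    have B: "B \<subseteq> {1..m}" "B' \<subseteq> {1..m}" using p1 p2 unfolding pset_def by auto
    have "i \<in> B \<longleftrightarrow> i \<in> B'" if i: "i \<in> {1..m}" for i
    proof -
      have "pset.rho m B i = pset.rho m B' i" using key[OF i] by simp
      then show ?thesis using i unfolding pset.rho_def[OF p1] pset.rho_def[OF p2] by (auto split: if_splits)
    qed
    then show ?thesis using B by blast
  qed
  ultimately show ?thesis by simp
qed



lemma top_params:
  assumes st: "(H,V) \<in> ht_states m" and t: "topst m H"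
  shows "\<exists>xs B. pset m xs B \<and> flips m H = pset.Ds m xs B"
proof -
  define F where "F = flips m H"
  have finI: "finite (VI m i \<inter> F)" for i using finite_VI by simp
  have finC: "finite (CJ m j \<inter> F)" for j using finite_CJ by simp
  have nf: "\<And>i. i \<in> {1..m+1} \<Longrightarrow> card (VI m i - F) = px m i"
    using t unfolding topst_def nfx_def nfx_eq F_def by auto
  have nfy': "\<And>j. j \<in> {1..m+1} \<Longrightarrow> card (CJ m j - F) = px m j"
    using topst_nfy[OF st t] unfolding nfy_def nfy_eq F_def by auto
  have rowc: "card (VI m i \<inter> F) = 1" if i: "i \<in> {1..m}" for i
  proof -
    have "card (VI m i - F) = card (VI m i) - card (VI m i \<inter> F)" using card_Diff_subset_Int[OF finI] .
    moreover have "card (VI m i \<inter> F) \<le> card (VI m i)" using finite_VI by (intro card_mono) auto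
    ultimately show ?thesis using nf[of i] i card_VI_low[OF i] unfolding px_def by auto
  qed
  have rowm: "VI m (m+1) \<inter> F = {}"
  proof -
    have "card (VI m (m+1) - F) = card (VI m (m+1)) - card (VI m (m+1) \<inter> F)" using card_Diff_subset_Int[OF finI] .
    moreover have "card (VI m (m+1) \<inter> F) \<le> card (VI m (m+1))" using finite_VI by (intro card_mono) auto
    ultimately have "card (VI m (m+1) \<inter> F) = 0" using nf[of "m+1"] card_VI_mid unfolding px_def by auto
    then show ?thesis using finI by simp
  qed
  have colc: "card (CJ m j \<inter> F) = 1" if j: "j \<in> {1..m}" for j
  proof -
    have "card (CJ m j - F) = card (CJ m j) - card (CJ m j \<inter> F)" using card_Diff_subset_Int[OF finC] .
    moreover have "card (CJ m j \<inter> F) \<le> card (CJ m j)" using finite_CJ by (intro card_mono) auto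
    ultimately show ?thesis using nfy'[of j] j card_CJ_low[OF j] unfolding px_def by auto
  qed
  have colm: "CJ m (m+1) \<inter> F = {}"
  proof -
    have "card (CJ m (m+1) - F) = card (CJ m (m+1)) - card (CJ m (m+1) \<inter> F)" using card_Diff_subset_Int[OF finC] .
    moreover have "card (CJ m (m+1) \<inter> F) \<le> card (CJ m (m+1))" using finite_CJ by (intro card_mono) auto
    ultimately have "card (CJ m (m+1) \<inter> F) = 0" using nfy'[of "m+1"] card_CJ_mid unfolding px_def by auto
    then show ?thesis using finC by simp
  qed
  have "\<forall>i\<in>{1..m}. \<exists>v. VI m i \<inter> F = {v}" using rowc by (auto simp: card_1_singleton_iff)
  then obtain g where g: "\<And>i. i \<in> {1..m} \<Longrightarrow> VI m i \<inter> F = {g i}" by metis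
  have gF: "g i \<in> F" "g i \<in> VI m i" if "i \<in> {1..m}" for i using g[OF that] by auto
  have gv: "g i \<in> ht_vert m" if "i \<in> {1..m}" for i using gF(2)[OF that] unfolding VI_def by auto
  have gidx: "idx m (fst (g i)) = i" if "i \<in> {1..m}" for i using gF(2)[OF that] unfolding VI_def by auto
  define c where "c i = snd (g i)" for i
  have c_range: "c i \<in> {1..m}" if i: "i \<in> {1..m}" for i
  proof -
    have "c i \<in> {1..m+1}" using snd_range[OF gv[OF i]] unfolding c_def .
    moreover have "c i \<noteq> m+1"
    proof
      assume "c i = m+1"
      then have "g i \<in> CJ m (m+1) \<inter> F" using gF[OF i] gv[OF i] unfolding CJ_def c_def by auto
      then show False using colm by blast
    qed
    ultimately show ?thesis by auto
  qed
  have c_inj: "inj_on c {1..m}"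
  proof (rule inj_onI)
    fix i k assume i: "i \<in> {1..m}" and k: "k \<in> {1..m}" and e: "c i = c k"
    have "\<exists>w. CJ m (c i) \<inter> F = {w}" using colc[OF c_range[OF i]] by (simp add: card_1_singleton_iff)
    then obtain w where w: "CJ m (c i) \<inter> F = {w}" by blast
    have "g i \<in> CJ m (c i) \<inter> F" using gF[OF i] gv[OF i] unfolding CJ_def c_def by auto
    moreover have "g k \<in> CJ m (c i) \<inter> F" using gF[OF k] gv[OF k] e unfolding CJ_def c_def by auto
    ultimately have "g i = g k" using w by auto
    then show "i = k" using gidx[OF i] gidx[OF k] by metis
  qed
  define xs where "xs = map c [1..<m+1]"
  have img: "c ` {1..m} = {1..m}"
  proof (rule card_subset_eq)
    show "finite {1..m::nat}" by simp
    show "c ` {1..m} \<subseteq> {1..m}" using c_range by auto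
    show "card (c ` {1..m}) = card {1..m::nat}" using card_image[OF c_inj] .
  qed
  have xsp: "xs \<in> permutations_of_set {1..m}"
  proof (rule permutations_of_setI)
    have su: "set [1..<m+1] = {1..m}" by auto
    show "set xs = {1..m}" by (simp only: xs_def set_map su img)
    show "distinct xs" unfolding xs_def distinct_map su using c_inj by simp
  qed
  define B where "B = {i\<in>{1..m}. fst (g i) \<noteq> i}"
  have P: "pset m xs B" unfolding pset_def using xsp B_def by auto
  have pi_c: "pset.pi xs i = c i" if i: "i \<in> {1..m}" for i
  proof -
    have "pset.pi xs i = xs ! (i - 1)" by (rule pset.pi_def[OF P])
    also have "\<dots> = c ([1..<m+1] ! (i - 1))" unfolding xs_def using i by (intro nth_map) auto
    also have "[1..<m+1] ! (i - 1) = i" using i nth_upt[of 1 "i-1" "m+1"] by (auto simp del: upt_Suc)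
    finally show ?thesis .
  qed
  have rho_g: "pset.rho m B i = fst (g i)" if i: "i \<in> {1..m}" for i
  proof -
    obtain r j where rj: "g i = (r,j)" by (cases "g i")
    have r: "1 \<le> r" "r \<le> 2*m+1" using gv[OF i] rj by (auto simp: vert_iff)
    have "min r (2*m+2-r) = i" using gidx[OF i] rj unfolding idx_def by simp
    then have "r = i \<or> r = 2*m+2-i" using r by auto
    moreover have "pset.rho m B i = (if i \<in> B then 2*m+2-i else i)" by (rule pset.rho_def[OF P])
    moreover have "i \<in> B \<longleftrightarrow> r \<noteq> i" unfolding B_def using rj i by simp
    ultimately show ?thesis using rj i by auto
  qed
  have Ds: "pset.Ds m xs B = g ` {1..m}"
    unfolding pset.Ds_def[OF P] using pi_c rho_g unfolding c_def by (intro image_cong refl) simp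
  have "F = g ` {1..m}"
  proof
    show "g ` {1..m} \<subseteq> F" using gF by auto
    show "F \<subseteq> g ` {1..m}"
    proof
      fix v assume v: "v \<in> F"
      then have vv: "v \<in> ht_vert m" unfolding F_def flips_def by auto
      define i where "i = idx m (fst v)"
      have i1: "i \<in> {1..m+1}" using idx_range[OF vv] unfolding i_def .
      have "i \<noteq> m+1" using rowm v vv unfolding VI_def i_def by auto
      then have i: "i \<in> {1..m}" using i1 by auto
      have "v \<in> VI m i \<inter> F" using v vv unfolding VI_def i_def by auto
      then have "v = g i" using g[OF i] by auto
      then show "v \<in> g ` {1..m}" using i by auto
    qed
  qed
  then have "flips m H = pset.Ds m xs B" using Ds unfolding F_def by simp
  then show ?thesis using P by blast
qed

lemma top_sum:
  assumes a: "a \<noteq> 0" and m: "m \<ge> 1"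
  shows "(\<Sum>st\<in>{st\<in>ht_states m. topst m (fst st)}. tw a m (fst st) (snd st)) = C_HT a m"
proof -
  define P where "P = permutations_of_set {1..m} \<times> Pow {1..m::nat}"
  define T where "T = {st\<in>ht_states m. topst m (fst st)}"
  define \<Phi> where "\<Phi> p = (pset.Hp m (fst p) (snd p), pset.Vp m (fst p) (snd p))" for p :: "nat list \<times> nat set"
  have pP: "pset m (fst p) (snd p)" if "p \<in> P" for p using that unfolding P_def pset_def by auto
  have bij: "bij_betw \<Phi> P T"
  proof (rule bij_betw_imageI)
    show "inj_on \<Phi> P"
    proof (rule inj_onI)
      fix p q assume p: "p \<in> P" and q: "q \<in> P" and e: "\<Phi> p = \<Phi> q"
      then have "pset.Hp m (fst p) (snd p) = pset.Hp m (fst q) (snd q)" unfolding \<Phi>_def by simp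
      then have "flips m (pset.Hp m (fst p) (snd p)) = flips m (pset.Hp m (fst q) (snd q))" by simp
      then have "pset.Ds m (fst p) (snd p) = pset.Ds m (fst q) (snd q)"
        unfolding pset.flips_Hp[OF pP[OF p]] pset.flips_Hp[OF pP[OF q]] .
      then have "fst p = fst q \<and> snd p = snd q" using pset_Ds_inj[OF pP[OF p] pP[OF q]] by blast
      then show "p = q" by (simp add: prod_eq_iff)
    qed
    show "\<Phi> ` P = T"
    proof
      show "\<Phi> ` P \<subseteq> T"
      proof
        fix st assume "st \<in> \<Phi> ` P"
        then obtain p where p: "p \<in> P" "st = \<Phi> p" by auto
        show "st \<in> T" unfolding T_def p(2) \<Phi>_def
          using pset.state_Hp[OF pP[OF p(1)] m] pset.topst_Hp[OF pP[OF p(1)]] by simp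
      qed
      show "T \<subseteq> \<Phi> ` P"
      proof
        fix st assume st: "st \<in> T"
        obtain H V where HV: "st = (H,V)" by (cases st)
        have st1: "(H,V) \<in> ht_states m" and t: "topst m H" using st HV unfolding T_def by auto
        obtain xs B where p: "pset m xs B" and fe: "flips m H = pset.Ds m xs B" using top_params[OF st1 t] by blast
        have sP: "(pset.Hp m xs B, pset.Vp m xs B) \<in> ht_states m" using pset.state_Hp[OF p m] .
        have "H = pset.Hp m xs B" using H_det[OF st1 sP] fe pset.flips_Hp[OF p] by simp
        moreover have "V = pset.Vp m xs B" using V_det[OF st1] sP calculation by simp
        moreover have "(xs, B) \<in> P" using p unfolding P_def pset_def by auto
        ultimately show "st \<in> \<Phi> ` P" unfolding HV \<Phi>_def by (intro image_eqI[of _ _ "(xs,B)"]) auto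
      qed
    qed
  qed
  have "(\<Sum>st\<in>T. tw a m (fst st) (snd st)) = (\<Sum>p\<in>P. tw a m (fst (\<Phi> p)) (snd (\<Phi> p)))"
    using sum.reindex_bij_betw[OF bij, of "\<lambda>st. tw a m (fst st) (snd st)"] by simp
  also have "\<dots> = (\<Sum>p\<in>P. sig (a^2) ^ m * (\<Prod>i=1..m. if i \<in> snd p then a^(4*nnx m (fst p) i+3) else - (inverse a ^ (4*nnx m (fst p) i+3))))"
  proof (rule sum.cong[OF refl])
    fix p assume p: "p \<in> P"
    have nn: "pset.nn m (fst p) i = nnx m (fst p) i" for i
      unfolding pset.nn_def[OF pP[OF p]] nnx_def pset.pi_def[OF pP[OF p]] ..
    show "tw a m (fst (\<Phi> p)) (snd (\<Phi> p)) = sig (a^2) ^ m * (\<Prod>i=1..m. if i \<in> snd p then a^(4*nnx m (fst p) i+3) else - (inverse a ^ (4*nnx m (fst p) i+3)))"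
      unfolding \<Phi>_def fst_conv snd_conv pset.tw_formula[OF pP[OF p] a] nn ..
  qed
  also have "\<dots> = (\<Sum>(xs,B)\<in>P. sig (a^2) ^ m * (\<Prod>i=1..m. if i \<in> B then a^(4*nnx m xs i+3) else - (inverse a ^ (4*nnx m xs i+3))))"
    by (simp add: case_prod_beta)
  also have "\<dots> = C_HT a m"
    unfolding P_def sum.cartesian_product[symmetric] by (rule sum_W[OF a])
  finally show ?thesis unfolding T_def .
qed



lemma Xm_eq: "Xm m x y = (\<Prod>i=1..m. x i ^ (4*m)) * x (m+1) ^ (2*m)"
proof -
  have "(\<Prod>i=1..m. x i ^ (2 * px m i) * y i ^ 0) = (\<Prod>i=1..m. x i ^ (4*m))"
    by (intro prod.cong refl) (auto simp: px_def)
  then show ?thesis unfolding Xm_def mon_def by (simp add: px_def)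
qed

theorem lemma15:
  fixes a :: complex and m :: nat
  assumes "a \<noteq> 0" and "m \<ge> 1"
  shows "\<exists>E :: ((nat \<Rightarrow> nat) \<times> (nat \<Rightarrow> nat)) set. \<exists>c. finite E
    \<and> (\<forall>(e,f)\<in>E. (\<Sum>i=1..m+1. e i) < 4*m*m + 2*m)
    \<and> (\<forall>x y :: nat \<Rightarrow> complex. (\<forall>i\<in>{1..m+1}. x i \<noteq> 0 \<and> y i \<noteq> 0) \<longrightarrow>
         Zt_HT a m x y =
           (\<Prod>i=1..m. x i ^ (4*m)) * x (m+1) ^ (2*m) * C_HT a m
           + (\<Sum>(e,f)\<in>E. c (e,f) * (\<Prod>i=1..m+1. x i ^ e i * y i ^ f i)))"
proof -
  let ?G = "\<lambda>st x y. trm a m (fst st) (snd st) x y - (if topst m (fst st) then tw a m (fst st) (snd st) * Xm m x y else 0)"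
  have P: "PL (m+1) (\<lambda>d. d < 4*m*m + 2*m) (\<lambda>x y. \<Sum>st\<in>ht_states m. ?G st x y)"
    using state_PL assms(1) finite_states by (intro PL_sum) auto
  have eq: "(\<Sum>st\<in>ht_states m. ?G st x y) = Zt_HT a m x y - Xm m x y * C_HT a m" for x y
  proof -
    have "(\<Sum>st\<in>ht_states m. (if topst m (fst st) then tw a m (fst st) (snd st) * Xm m x y else 0))
        = (\<Sum>st\<in>{st\<in>ht_states m. topst m (fst st)}. tw a m (fst st) (snd st)) * Xm m x y"
      using finite_states by (simp add: sum.inter_filter[symmetric] sum_distrib_right)
    then show ?thesis unfolding sum_subtractf Zt_eq top_sum[OF assms]
      by (simp add: case_prod_beta mult.commute)
  qed
  obtain E c where E: "finite E" "\<forall>(e,f)\<in>E. degx (m+1) e < 4*m*m + 2*m"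
    "\<forall>x y. nzv (m+1) x y \<longrightarrow> (\<Sum>st\<in>ht_states m. ?G st x y) = (\<Sum>(e,f)\<in>E. c (e,f) * mon (m+1) e f x y)"
    using P unfolding PL_def by blast
  show ?thesis
  proof (intro exI[of _ E] exI[of _ c] conjI allI impI)
    show "finite E" by fact
    show "\<forall>(e,f)\<in>E. (\<Sum>i=1..m+1. e i) < 4*m*m + 2*m" using E(2) unfolding degx_def .
    fix x y :: "nat \<Rightarrow> complex" assume "\<forall>i\<in>{1..m+1}. x i \<noteq> 0 \<and> y i \<noteq> 0"
    then have nz: "nzv (m+1) x y" unfolding nzv_def .
    have "(\<Sum>st\<in>ht_states m. ?G st x y) = (\<Sum>(e,f)\<in>E. c (e,f) * mon (m+1) e f x y)"
      using E(3) nz by blast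
    then have "Zt_HT a m x y - Xm m x y * C_HT a m = (\<Sum>(e,f)\<in>E. c (e,f) * mon (m+1) e f x y)"
      unfolding eq .
    then have "Zt_HT a m x y = Xm m x y * C_HT a m + (\<Sum>(e,f)\<in>E. c (e,f) * mon (m+1) e f x y)"
      by (simp add: diff_eq_eq add.commute)
    then show "Zt_HT a m x y = (\<Prod>i=1..m. x i ^ (4*m)) * x (m+1) ^ (2*m) * C_HT a m
           + (\<Sum>(e,f)\<in>E. c (e,f) * (\<Prod>i=1..m+1. x i ^ e i * y i ^ f i))"
      unfolding Xm_eq mon_def .
  qed
qed


end
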